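(* There is an algorithm which, given a one-dimensional Peg Solitaire configuration $w\in\{0,1\}^n$ that can be reduced to a single peg, outputs a sequence of hops reducing $w$ to a single peg, in time $O(n)$.
   Context: One-dimensional Peg Solitaire: a configuration is a finite word $w=c_0\cdots c_{n-1}\in\{0,1\}^*$ describing a row of $n$ consecutive sites ($1$ = peg, $0$ = hole); the board consists exactly of these sites. A hop takes three consecutive sites within the board with pegs on one end site and the middle site and a hole on the other end site, moves the end peg into the hole and removes the middle peg ($110\to001$ or $011\to100$). The computational model is the standard RAM model. *)

theory Defs
  imports Main
begin

text \<open>A configuration is a word over {0,1}, represented as a list of booleans
  (True = peg, False = hole). The board consists exactly of these sites.\<close>

type_synonym config = "bool list"

text \<open>A hop is given by the index i of the leftmost of three consecutive sites
  i, i+1, i+2 and a direction: False means 110 -> 001 (peg at i jumps right over i+1),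
  True means 011 -> 100 (peg at i+2 jumps left over i+1).\<close>

type_synonym hopmove = "nat \<times> bool"

definition apply_hop :: "hopmove \<Rightarrow> config \<Rightarrow> config option" where
  "apply_hop h w = (case h of (i, d) \<Rightarrow>
     if i + 2 < length w then
       (if \<not> d \<and> w ! i \<and> w ! (i+1) \<and> \<not> w ! (i+2)
        then Some (w[i := False, i+1 := False, i+2 := True])
        else if d \<and> \<not> w ! i \<and> w ! (i+1) \<and> w ! (i+2)
        then Some (w[i := True, i+1 := False, i+2 := False])
        else None)
     else None)"

fun apply_hops :: "hopmove list \<Rightarrow> config \<Rightarrow> config option" where
  "apply_hops [] w = Some w"
| "apply_hops (h # hs) w = (case apply_hop h w of None \<Rightarrow> None | Some w' \<Rightarrow> apply_hops hs w')"

definition pegs :: "config \<Rightarrow> nat" where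
  "pegs w = length (filter id w)"

definition hop_step :: "config \<Rightarrow> config \<Rightarrow> bool" where
  "hop_step w w' \<longleftrightarrow> (\<exists>h. apply_hop h w = Some w')"

definition reducible_to_one :: "config \<Rightarrow> bool" where
  "reducible_to_one w \<longleftrightarrow> (\<exists>w'. hop_step\<^sup>*\<^sup>* w w' \<and> pegs w' = 1)"

datatype instr =
    LoadConst nat int
  | AddI nat nat nat
  | SubI nat nat nat
  | LoadI nat nat
  | StoreI nat nat           \<comment> \<open>M[R[a]] := R[r]  (StoreI a r)\<close>
  | Jz nat nat               \<comment> \<open>if R[r] = 0 then goto l  (Jz r l)\<close>
  | Jmp nat
  | Halt

record ram_state =
  pc :: nat
  regs :: "nat \<Rightarrow> int"
  mem :: "int \<Rightarrow> int"

definition halted :: "instr list \<Rightarrow> ram_state \<Rightarrow> bool" where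
  "halted P s \<longleftrightarrow> pc s \<ge> length P \<or> P ! pc s = Halt"

definition exec1 :: "instr list \<Rightarrow> ram_state \<Rightarrow> ram_state" where
  "exec1 P s = (if halted P s then s else
     (case P ! pc s of
        LoadConst r k \<Rightarrow> s\<lparr>pc := Suc (pc s), regs := (regs s)(r := k)\<rparr>
      | AddI r a b \<Rightarrow> s\<lparr>pc := Suc (pc s), regs := (regs s)(r := regs s a + regs s b)\<rparr>
      | SubI r a b \<Rightarrow> s\<lparr>pc := Suc (pc s), regs := (regs s)(r := regs s a - regs s b)\<rparr>
      | LoadI r a \<Rightarrow> s\<lparr>pc := Suc (pc s), regs := (regs s)(r := mem s (regs s a))\<rparr>
      | StoreI a r \<Rightarrow> s\<lparr>pc := Suc (pc s), mem := (mem s)(regs s a := regs s r)\<rparr>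
      | Jz r l \<Rightarrow> s\<lparr>pc := (if regs s r = 0 then l else Suc (pc s))\<rparr>
      | Jmp l \<Rightarrow> s\<lparr>pc := l\<rparr>
      | Halt \<Rightarrow> s))"

definition run :: "instr list \<Rightarrow> nat \<Rightarrow> ram_state \<Rightarrow> ram_state" where
  "run P k = (exec1 P ^^ k)"

text \<open>Input encoding: M[0] = n, M[i+1] = c_i (0 or 1) for i < n, all else 0.\<close>

definition init_state :: "config \<Rightarrow> ram_state" where
  "init_state w = \<lparr>pc = 0, regs = (\<lambda>_. 0),
     mem = (\<lambda>a. if a = 0 then int (length w)
                else if 1 \<le> a \<and> a \<le> int (length w) then (if w ! nat (a - 1) then 1 else 0)
                else 0)\<rparr>"

text \<open>Output encoding: M[0] = m (number of hops); for j < m, M[2j+1] = i_j and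
  M[2j+2] = d_j \<in> {0,1}, describing the hop (i_j, d_j).\<close>

definition output_hops :: "(int \<Rightarrow> int) \<Rightarrow> hopmove list" where
  "output_hops M = map (\<lambda>j. (nat (M (2 * int j + 1)), M (2 * int j + 2) = 1)) [0..<nat (M 0)]"

definition output_wellformed :: "(int \<Rightarrow> int) \<Rightarrow> bool" where
  "output_wellformed M \<longleftrightarrow> M 0 \<ge> 0 \<and>
     (\<forall>j < nat (M 0). M (2 * int j + 1) \<ge> 0 \<and> M (2 * int j + 2) \<in> {0, 1})"

definition solves :: "config \<Rightarrow> (int \<Rightarrow> int) \<Rightarrow> bool" where
  "solves w M \<longleftrightarrow> output_wellformed M \<and>
     (\<exists>w'. apply_hops (output_hops M) w = Some w' \<and> pegs w' = 1)"

end

theory Submission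
  imports Defs
begin

definition dtab :: "(nat \<times> nat) list" where
  "dtab = [(1,2),(1,3),(4,5),(4,6),(7,8),(3,9),(3,9),(7,10),(11,4),(12,13),(10,10),(10,14),(10,15),(8,16),(11,7),(10,11),(12,17),(14,16)]"

definition dfa :: "nat \<Rightarrow> bool \<Rightarrow> nat" where
  "dfa q b = (if q < 18 then (if b then snd (dtab ! q) else fst (dtab ! q)) else 10)"

definition acc :: "nat \<Rightarrow> bool" where
  "acc q \<longleftrightarrow> q \<in> {2,3,4,6,7}"

definition runD :: "nat \<Rightarrow> bool list \<Rightarrow> nat" where
  "runD q w = foldl dfa q w"

lemma runD_simps[simp]: "runD q [] = q" "runD q (b # w) = runD (dfa q b) w"
  "runD q (u @ v) = runD (runD q u) v"
  by (simp_all add: runD_def)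

lemma all18: "(\<forall>p<n. P p) \<longleftrightarrow> list_all P [0..<n]"
  by (auto simp: list_all_iff)

lemma dfa_lt: "dfa q b < 18"
proof -
  have "\<forall>q<18. fst (dtab ! q) < 18 \<and> snd (dtab ! q) < 18"
    unfolding all18 by (simp add: dtab_def upt_rec)
  then show ?thesis by (auto simp: dfa_def)
qed

definition simL :: "nat list list" where
  "simL = [[0,1],[1],[2,3],[3],[4],[5,6],[6],[2,3,4,6,7],[8],[9],[0,1,2,3,4,5,6,7,8,9,10,11,12,13,14,15,16,17],[1,4,11],[4,12],[13],[0,1,3,8,14],[8,15],[2,3,9,16],[0,1,5,6,13,17]]"

definition sim :: "nat \<Rightarrow> nat \<Rightarrow> bool" where
  "sim p q \<longleftrightarrow> p < 18 \<and> q \<in> set (simL ! p)"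

lemma sim_ok: "\<forall>p<18. list_all (\<lambda>q. (acc p \<longrightarrow> acc q) \<and> sim (dfa p False) (dfa q False)
      \<and> sim (dfa p True) (dfa q True)) (simL ! p)"
  unfolding all18 by (simp add: upt_rec simL_def sim_def dfa_def dtab_def acc_def)

lemma sim_step: "sim p q \<Longrightarrow> (acc p \<longrightarrow> acc q) \<and> sim (dfa p b) (dfa q b)"
proof -
  assume "sim p q"
  then have p: "p < 18" and q: "q \<in> set (simL ! p)" by (auto simp: sim_def)
  from sim_ok p have "list_all (\<lambda>q. (acc p \<longrightarrow> acc q) \<and> sim (dfa p False) (dfa q False)
      \<and> sim (dfa p True) (dfa q True)) (simL ! p)" by blast
  with q have "(acc p \<longrightarrow> acc q) \<and> sim (dfa p False) (dfa q False)
      \<and> sim (dfa p True) (dfa q True)" by (simp add: list_all_iff)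
  then show ?thesis by (cases b) simp_all
qed

lemma sim_run: "sim p q \<Longrightarrow> acc (runD p y) \<Longrightarrow> acc (runD q y)"
proof (induction y arbitrary: p q)
  case Nil then show ?case using sim_step by auto
next
  case (Cons b y) then show ?case using sim_step[of p q b] by auto
qed

lemma clos_ok: "\<forall>p<18. sim (runD p [False,False,True]) (runD p [True,True,False])
     \<and> sim (runD p [True,False,False]) (runD p [False,True,True])"
  unfolding all18 by (simp add: upt_rec simL_def sim_def dfa_def dtab_def)

lemma runD_lt: "p < 18 \<Longrightarrow> runD p w < 18"
  by (induction w arbitrary: p) (auto simp: dfa_lt)

lemma nth3_decomp: "i + 2 < length w \<Longrightarrow>
   w = take i w @ [w ! i, w ! (i+1), w ! (i+2)] @ drop (i+3) w"
proof -
  assume a: "i + 2 < length w"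
  have "w = take i w @ drop i w" by simp
  also have "drop i w = w ! i # drop (Suc i) w" using a by (simp add: Cons_nth_drop_Suc)
  also have "drop (Suc i) w = w ! (i+1) # drop (Suc (Suc i)) w" using a by (simp add: Cons_nth_drop_Suc)
  also have "drop (Suc (Suc i)) w = w ! (Suc (Suc i)) # drop (Suc (Suc (Suc i))) w" using a
    by (simp add: Cons_nth_drop_Suc)
  finally show ?thesis by (simp add: numeral_3_eq_3 numeral_2_eq_2)
qed

lemma upd3_decomp: "i + 2 < length w \<Longrightarrow>
   w[i := a, i+1 := b, i+2 := c] = take i w @ [a, b, c] @ drop (i+3) w"
proof -
  assume l: "i + 2 < length w"
  have "w[i := a, i+1 := b, i+2 := c] = (take i w @ [w ! i, w ! (i+1), w ! (i+2)] @ drop (i+3) w)[i := a, i+1 := b, i+2 := c]"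
    using nth3_decomp[OF l] by simp
  also have "\<dots> = take i w @ [a, b, c] @ drop (i+3) w"
    using l by (simp add: list_update_append min_def)
  finally show ?thesis .
qed

lemma apply_hop_decomp:
  assumes "apply_hop h w = Some w'"
  shows "\<exists>x y. (w = x @ [True,True,False] @ y \<and> w' = x @ [False,False,True] @ y)
             \<or> (w = x @ [False,True,True] @ y \<and> w' = x @ [True,False,False] @ y)"
proof -
  obtain i d where h: "h = (i, d)" by (cases h)
  from assms have len: "i + 2 < length w" by (auto simp: apply_hop_def h split: if_splits)
  note D = nth3_decomp[OF len] upd3_decomp[OF len]
  show ?thesis
  proof (cases d)
    case True
    with assms len have b: "\<not> w ! i \<and> w ! (i+1) \<and> w ! (i+2)" and w': "w' = w[i := True, i+1 := False, i+2 := False]"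
      by (auto simp: apply_hop_def h split: if_splits)
    from b have eq: "[w ! i, w ! (i+1), w ! (i+2)] = [False,True,True]" by simp
    have "w = take i w @ [False,True,True] @ drop (i+3) w" using D(1)[unfolded eq] .
    moreover have "w' = take i w @ [True,False,False] @ drop (i+3) w" using D(2) w' by simp
    ultimately show ?thesis by blast
  next
    case False
    with assms len have b: "w ! i \<and> w ! (i+1) \<and> \<not> w ! (i+2)" and w': "w' = w[i := False, i+1 := False, i+2 := True]"
      by (auto simp: apply_hop_def h split: if_splits)
    from b have eq: "[w ! i, w ! (i+1), w ! (i+2)] = [True,True,False]" by simp
    have "w = take i w @ [True,True,False] @ drop (i+3) w" using D(1)[unfolded eq] .
    moreover have "w' = take i w @ [False,False,True] @ drop (i+3) w" using D(2) w' by simp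
    ultimately show ?thesis by blast
  qed
qed

lemma acc_back: "hop_step w w' \<Longrightarrow> acc (runD 0 w') \<Longrightarrow> acc (runD 0 w)"
proof -
  assume "hop_step w w'" "acc (runD 0 w')"
  then obtain h where "apply_hop h w = Some w'" by (auto simp: hop_step_def)
  from apply_hop_decomp[OF this] obtain x y where
    c: "(w = x @ [True,True,False] @ y \<and> w' = x @ [False,False,True] @ y)
             \<or> (w = x @ [False,True,True] @ y \<and> w' = x @ [True,False,False] @ y)" by blast
  have lt: "runD 0 x < 18" by (rule runD_lt) simp
  from c show ?thesis
  proof
    assume a: "w = x @ [True,True,False] @ y \<and> w' = x @ [False,False,True] @ y"
    have "sim (runD (runD 0 x) [False,False,True]) (runD (runD 0 x) [True,True,False])"
      using clos_ok lt by blast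
    then show ?thesis using a sim_run \<open>acc (runD 0 w')\<close> by (metis runD_simps(3))
  next
    assume a: "w = x @ [False,True,True] @ y \<and> w' = x @ [True,False,False] @ y"
    have "sim (runD (runD 0 x) [True,False,False]) (runD (runD 0 x) [False,True,True])"
      using clos_ok lt by blast
    then show ?thesis using a sim_run \<open>acc (runD 0 w')\<close> by (metis runD_simps(3))
  qed
qed

lemma pegs_Cons[simp]: "pegs (b # w) = (if b then Suc (pegs w) else pegs w)" "pegs [] = 0"
  by (auto simp: pegs_def)

lemma zero_pegs: "pegs w = 0 \<Longrightarrow> p \<in> {2,3,4,7} \<Longrightarrow> runD p w \<in> {2,3,4,7}"
proof (induction w arbitrary: p)
  case Nil then show ?case by simp
next
  case (Cons b w)
  then have "\<not> b" "pegs w = 0" by (auto split: if_splits)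
  moreover have "dfa p False \<in> {2,3,4,7}" using Cons.prems by (auto simp: dfa_def dtab_def)
  ultimately show ?case using Cons.IH by simp
qed

lemma one_peg: "pegs w = 1 \<Longrightarrow> p \<in> {0,1} \<Longrightarrow> runD p w \<in> {2,3,4,7}"
proof (induction w arbitrary: p)
  case Nil then show ?case by simp
next
  case (Cons b w)
  show ?case
  proof (cases b)
    case True
    then have "pegs w = 0" using Cons.prems by simp
    moreover have "dfa p True \<in> {2,3,4,7}" using Cons.prems by (auto simp: dfa_def dtab_def)
    ultimately show ?thesis using zero_pegs True by simp
  next
    case False
    then have "pegs w = 1" using Cons.prems by simp
    moreover have "dfa p False \<in> {0,1}" using Cons.prems by (auto simp: dfa_def dtab_def)
    ultimately show ?thesis using Cons.IH False by simp
  qed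
qed

theorem necessity: "reducible_to_one w \<Longrightarrow> acc (runD 0 w)"
proof -
  assume "reducible_to_one w"
  then obtain w' where r: "hop_step\<^sup>*\<^sup>* w w'" and p: "pegs w' = 1" by (auto simp: reducible_to_one_def)
  have "acc (runD 0 w')" using one_peg[OF p, of 0] by (auto simp: acc_def)
  from r this show ?thesis
    by (induction rule: converse_rtranclp_induct) (auto intro: acc_back)
qed

definition fv :: "nat \<Rightarrow> nat \<Rightarrow> nat \<Rightarrow> int" where
 "fv f q b = (if f = 0 then (if b < 2 then int (dfa q (b = 1)) else 0)
   else if f = 1 then (if (q,b) \<in> {(0,1),(1,1)} then 1 else 0)
   else if f = 2 then (if (q,b) \<in> {(5,0),(6,0),(8,1),(13,0),(14,1),(15,1),(17,0)} then 2 else 0)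
   else if f = 3 then (if (q,b) \<in> {(8,1),(14,1),(15,1),(6,2)} then 1 else 0)
   else if f = 4 then (if (q,b) = (6,2) then -1 else 0)
   else if f = 5 then (if (q,b) = (15,1) then 1 else 0)
   else if f = 6 then (if (q,b) \<in> {(8,1),(14,1)} then 1 else if (q,b) = (15,1) then -2
                       else if (q,b) = (6,2) then -1 else 0)
   else if f = 7 then (if (q,b) \<in> {(8,1),(14,1),(15,1),(6,2)} then 1 else 0)
   else if f = 8 then (if (q,b) \<in> {(5,0),(6,0),(13,0),(15,1),(17,0)} then 1 else 0)
   else if f = 9 then (if (q,b) \<in> {(8,1),(14,1)} then 2 else if (q,b) = (15,1) then -1 else 0)
   else 0)"

definition segs :: "int \<Rightarrow> int \<Rightarrow> bool \<Rightarrow> (int \<times> bool) list" where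
  "segs hi lo d = map (\<lambda>k. (hi - 2 * int k, d)) [0..<nat ((hi - lo) div 2 + 1)]"

definition hiA where "hiA i q b s1 = (if fv 3 q b \<noteq> 0 then i else s1) + fv 4 q b - 2"
definition loA where "loA i q b s1 = (if fv 5 q b \<noteq> 0 then i else s1) + fv 6 q b"
definition hiB where "hiB i q b s1 = (if fv 8 q b \<noteq> 0 then i else s1) + fv 9 q b - 2"
definition sup1 where "sup1 i q b s = (if fv 1 q b \<noteq> 0 then i else s)"

definition astep :: "int \<Rightarrow> nat \<Rightarrow> nat \<times> int \<times> (int \<times> bool) list \<Rightarrow> nat \<times> int \<times> (int \<times> bool) list" where
 "astep i b st = (case st of (q, s, out) \<Rightarrow>
   let s1 = sup1 i q b s
   in (nat (fv 0 q b), s1 + fv 2 q b,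
       out @ segs (hiA i q b s1) (loA i q b s1) (fv 7 q b \<noteq> 0) @ segs (hiB i q b s1) s1 False))"

definition proper :: "int \<Rightarrow> int \<Rightarrow> bool" where
  "proper hi lo \<longleftrightarrow> (hi - lo) mod 2 = 0 \<and> hi \<ge> lo - 2"

definition step_proper where
  "step_proper i q b s \<longleftrightarrow> proper (hiA i q b (sup1 i q b s)) (loA i q b (sup1 i q b s))
      \<and> proper (hiB i q b (sup1 i q b s)) (sup1 i q b s)"

definition convh :: "(int \<times> bool) list \<Rightarrow> hopmove list" where
  "convh out = map (\<lambda>(x,d). (nat x, d)) out"

definition tf :: "nat \<Rightarrow> bool list" where "tf m = concat (replicate m [True, False])"
definition ft :: "nat \<Rightarrow> bool list" where "ft m = concat (replicate m [False, True])"
abbreviation ones :: "nat \<Rightarrow> bool list" where "ones k \<equiv> replicate k True"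
abbreviation zs :: "nat \<Rightarrow> bool list" where "zs k \<equiv> replicate k False"

lemma apply_hops_append: "apply_hops (xs @ ys) w =
   (case apply_hops xs w of None \<Rightarrow> None | Some w' \<Rightarrow> apply_hops ys w')"
  by (induction xs arbitrary: w) (auto split: option.splits)

lemma apply_hops_Some_append: "apply_hops xs w = Some w' \<Longrightarrow> apply_hops (xs @ ys) w = apply_hops ys w'"
  by (simp add: apply_hops_append)

lemma apply_hops_conv_Cons: "apply_hops (convh ((a, d) # rest)) w =
  (case apply_hop (nat a, d) w of None \<Rightarrow> None | Some w' \<Rightarrow> apply_hops (convh rest) w')"
  unfolding convh_def by simp

lemma hopR: "length x = p \<Longrightarrow> apply_hop (p, False) (x @ [True,True,False] @ y) = Some (x @ [False,False,True] @ y)"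
  by (simp add: apply_hop_def nth_append list_update_append)

lemma hopL: "length x = p \<Longrightarrow> apply_hop (p, True) (x @ [False,True,True] @ y) = Some (x @ [True,False,False] @ y)"
  by (simp add: apply_hop_def nth_append list_update_append)

lemma segs_Cons: "hi \<ge> lo \<Longrightarrow> segs hi lo d = (hi, d) # segs (hi - 2) lo d"
proof -
  assume a: "hi \<ge> lo"
  have e: "nat ((hi - lo) div 2 + 1) = Suc (nat ((hi - 2 - lo) div 2 + 1))" using a by simp
  show ?thesis unfolding segs_def e upt_conv_Cons[OF zero_less_Suc] list.map(2)
    by (simp add: map_Suc_upt[symmetric] del: upt_Suc)
qed

lemma segs_Nil: "hi = lo - 2 \<Longrightarrow> segs hi lo d = []"
  by (simp add: segs_def)

lemma tf_Suc: "tf (Suc m) = tf m @ [True, False]"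
  by (simp add: tf_def replicate_append_same[symmetric])

lemma ft_Suc: "ft (Suc m) = ft m @ [False, True]"
  by (simp add: ft_def replicate_append_same[symmetric])

lemma length_tf[simp]: "length (tf m) = 2 * m"
  by (induction m) (auto simp: tf_Suc, simp add: tf_def)

lemma length_ft[simp]: "length (ft m) = 2 * m"
  by (induction m) (auto simp: ft_Suc, simp add: ft_def)

lemma ft_F: "ft m @ [False] = False # tf m"
  by (induction m) (auto simp: ft_def tf_def)

lemma zs_FF: "zs k @ False # False # y = False # False # zs k @ y"
  by (induction k) auto

lemma casc1: "length x = p \<Longrightarrow>
  apply_hops (convh (segs (int p + 2 * int m - 1) (int p + 1) True)) (x @ tf m @ [True,True] @ y)
    = Some (x @ [True,True] @ zs (2*m) @ y)"
proof (induction m arbitrary: y)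
  case 0 then show ?case by (simp add: segs_Nil tf_def convh_def)
next
  case (Suc m)
  have s: "segs (int p + 2 * int (Suc m) - 1) (int p + 1) True
      = (int p + 2 * int m + 1, True) # segs (int p + 2 * int m - 1) (int p + 1) True"
    by (subst segs_Cons) (auto simp: algebra_simps)
  have w: "x @ tf (Suc m) @ [True,True] @ y = (x @ tf m @ [True]) @ [False,True,True] @ y"
    by (simp add: tf_Suc)
  have l: "length (x @ tf m @ [True]) = p + 2 * m + 1" using Suc.prems by simp
  have h: "apply_hop (Suc (p + 2*m), True) (x @ tf (Suc m) @ [True,True] @ y) = Some (x @ tf m @ [True,True] @ ([False,False] @ y))"
    using hopL[OF l] unfolding w by simp
  have n: "nat (int p + 2 * int m + 1) = Suc (p + 2*m)" by simp
  have "apply_hops (convh (segs (int p + 2 * int (Suc m) - 1) (int p + 1) True)) (x @ tf (Suc m) @ [True,True] @ y)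
     = apply_hops (convh (segs (int p + 2 * int m - 1) (int p + 1) True)) (x @ tf m @ [True,True] @ ([False,False] @ y))"
    unfolding s by (simp add: convh_def n h del: append.simps)
  also have "\<dots> = Some (x @ [True,True] @ zs (2*m) @ ([False,False] @ y))" by (rule Suc.IH[OF Suc.prems])
  also have "\<dots> = Some (x @ [True,True] @ zs (2*Suc m) @ y)" by (simp add: zs_FF)
  finally show ?case .
qed

lemma ones_TT0: "ones k @ [True,True] = True # True # ones k"
  by (induction k) auto

lemma ones_TT: "ones (2 * Suc j) = ones (2*j) @ [True,True]"
  by (simp add: ones_TT0)

lemma casc2: "length x = p \<Longrightarrow>
  apply_hops (convh (segs (int p + 2 * int j - 2) (int p) False)) (x @ ones (2*j) @ [False] @ y)
    = Some (x @ [False] @ ft j @ y)"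
proof (induction j arbitrary: y)
  case 0 then show ?case by (simp add: segs_Nil ft_def convh_def)
next
  case (Suc j)
  have s: "segs (int p + 2 * int (Suc j) - 2) (int p) False
      = (int p + 2 * int j, False) # segs (int p + 2 * int j - 2) (int p) False"
    by (subst segs_Cons) (auto simp: algebra_simps)
  have w: "x @ ones (2 * Suc j) @ [False] @ y = (x @ ones (2*j)) @ [True,True,False] @ y"
    unfolding ones_TT by simp
  have l: "length (x @ ones (2*j)) = p + 2 * j" using Suc.prems by simp
  have h: "apply_hop (p + 2*j, False) (x @ ones (2 * Suc j) @ [False] @ y) = Some (x @ ones (2*j) @ [False] @ ([False,True] @ y))"
    using hopR[OF l] unfolding w by simp
  have n: "nat (int p + 2 * int j) = p + 2*j" by simp
  have "apply_hops (convh (segs (int p + 2 * int (Suc j) - 2) (int p) False)) (x @ ones (2 * Suc j) @ [False] @ y)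
     = apply_hops (convh (segs (int p + 2 * int j - 2) (int p) False)) (x @ ones (2*j) @ [False] @ ([False,True] @ y))"
    unfolding s apply_hops_conv_Cons n h by simp
  also have "\<dots> = Some (x @ [False] @ ft j @ ([False,True] @ y))" by (rule Suc.IH[OF Suc.prems])
  also have "\<dots> = Some (x @ [False] @ ft (Suc j) @ y)" by (simp add: ft_Suc)
  finally show ?case .
qed

definition inv :: "nat \<Rightarrow> nat \<Rightarrow> nat \<Rightarrow> bool list \<Rightarrow> bool" where
"inv q s i cfg \<longleftrightarrow> (
  if q = 0 then i = 0 \<and> cfg = []
  else if q = 1 then i \<ge> 1 \<and> cfg = zs i
  else if q = 2 then s = 0 \<and> i = 1 \<and> cfg = [True]
  else if q = 3 then s \<ge> 1 \<and> i = s+1 \<and> cfg = zs s @ [True]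
  else if q = 4 then i = s+2 \<and> cfg = zs s @ [True,False]
  else if q = 5 then s = 0 \<and> i = 2 \<and> cfg = [True,True]
  else if q = 6 then s \<ge> 1 \<and> i = s+2 \<and> cfg = zs s @ [True,True]
  else if q = 7 then i \<ge> s+3 \<and> cfg = zs s @ True # zs (i-s-1)
  else if q = 8 then i = s+3 \<and> cfg = zs s @ [True,False,True]
  else if q = 9 then i = s+3 \<and> cfg = zs s @ [True,True,True]
  else if q = 11 then (\<exists>m\<ge>2. i = s+2*m \<and> cfg = zs s @ tf m)
  else if q = 12 then (\<exists>j\<ge>1. i = s+2*j+2 \<and> cfg = zs s @ ones (2*j+1) @ [False])
  else if q = 13 then i = s+4 \<and> cfg = zs s @ ones 4
  else if q = 14 then (\<exists>m\<ge>2. i = s+2*m+1 \<and> cfg = zs s @ tf m @ [True])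
  else if q = 15 then (\<exists>j\<ge>1. i = s+2*j+3 \<and> cfg = zs s @ ones (2*j+1) @ [False,True])
  else if q = 16 then (\<exists>j\<ge>2. i = s+2*j+1 \<and> cfg = zs s @ ones (2*j+1))
  else if q = 17 then (\<exists>j\<ge>3. i = s+2*j \<and> cfg = zs s @ ones (2*j))
  else False)"

definition gstep :: "nat \<Rightarrow> nat \<Rightarrow> nat \<Rightarrow> bool list \<Rightarrow> bool \<Rightarrow> bool" where
 "gstep q s i cfg bb \<longleftrightarrow> (\<exists>s' hs cfg'. astep (int i) (if bb then 1 else 0) (q, int s, []) = (dfa q bb, int s', hs)
    \<and> (\<forall>rest. apply_hops (convh hs) (cfg @ bb # rest) = Some (cfg' @ rest))
    \<and> inv (dfa q bb) s' (Suc i) cfg' \<and> (\<forall>x\<in>set hs. fst x \<ge> 0)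
    \<and> step_proper (int i) q (if bb then 1 else 0) (int s))"

lemma gstepI:
  assumes "astep (int i) (if bb then 1 else 0) (q, int s, []) = (dfa q bb, int s', hs)"
    "\<And>rest. apply_hops (convh hs) (cfg @ bb # rest) = Some (cfg' @ rest)"
    "inv (dfa q bb) s' (Suc i) cfg'" "\<forall>x\<in>set hs. fst x \<ge> 0"
    "step_proper (int i) q (if bb then 1 else 0) (int s)"
  shows "gstep q s i cfg bb"
  using assms unfolding gstep_def by blast

lemmas AS = astep_def sup1_def hiA_def loA_def hiB_def fv_def dfa_def dtab_def step_proper_def proper_def

lemma convh_simps[simp]: "convh [] = []" "convh (a @ b) = convh a @ convh b"
  "convh ((x,d) # r) = (nat x, d) # convh r"
  by (simp_all add: convh_def)

lemma rep_num: "replicate (numeral k) x = x # replicate (pred_numeral k) x"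
  by (simp add: numeral_eq_Suc)

lemma segs_Nil': "segs (x - 2) x d = []" by (simp add: segs_def)
lemma segs_one: "segs x x d = [(x, d)]" by (simp add: segs_def)

lemma t0F: "inv 0 s i cfg \<Longrightarrow> gstep 0 s i cfg False"
  by (rule gstepI[where s'=s and hs="[]" and cfg'="[False]"]) (simp_all add: AS inv_def segs_Nil')

lemma t0T: "inv 0 s i cfg \<Longrightarrow> gstep 0 s i cfg True"
  by (rule gstepI[where s'=0 and hs="[]" and cfg'="[True]"]) (simp_all add: AS inv_def segs_Nil')

lemma t11T: assumes "inv 11 s i cfg" shows "gstep 11 s i cfg True"
proof -
  from assms obtain m where m: "m \<ge> 2" "i = s + 2*m" "cfg = zs s @ tf m" by (auto simp: inv_def)
  show ?thesis
  proof (rule gstepI[where s'=s and hs="[]" and cfg'="zs s @ tf m @ [True]"])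
    show "inv (dfa 11 True) s (Suc i) (zs s @ tf m @ [True])"
      using m by (auto simp: inv_def dfa_def dtab_def intro!: exI[of _ m])
  qed (use m in \<open>simp_all add: AS segs_Nil'\<close>)
qed

lemma t14T: assumes "inv 14 s i cfg" shows "gstep 14 s i cfg True"
proof -
  from assms obtain m where m: "m \<ge> 2" "i = s + 2*m + 1" "cfg = zs s @ tf m @ [True]" by (auto simp: inv_def)
  define hs where "hs = segs (int s + 2 * int m - 1) (int s + 1) True @ [(int s, False)]"
  show ?thesis
  proof (rule gstepI[where s'="s+2" and hs=hs and cfg'="zs (s+2) @ True # zs (2*m - 1)"])
    show "astep (int i) (if True then 1 else 0) (14, int s, []) = (dfa 14 True, int (s + 2), hs)"
      using m by (simp add: AS hs_def segs_one)
    show "inv (dfa 14 True) (s+2) (Suc i) (zs (s+2) @ True # zs (2*m - 1))"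
      using m by (simp add: inv_def dfa_def dtab_def)
    show "step_proper (int i) 14 (if True then 1 else 0) (int s)"
      using m by (simp add: AS)
    show "\<forall>x\<in>set hs. fst x \<ge> 0" unfolding hs_def segs_def by auto
    fix rest
    have c: "cfg @ True # rest = zs s @ tf m @ [True,True] @ rest" using m by simp
    have z: "zs (2*m) = False # zs (2*m-1)" using m by (cases m) auto
    have "apply_hops (convh hs) (cfg @ True # rest) = apply_hops (convh [(int s, False)]) (zs s @ [True,True] @ zs (2*m) @ rest)"
      unfolding hs_def c convh_def map_append by (rule apply_hops_Some_append[OF casc1[unfolded convh_def]]) simp
    also have "\<dots> = Some (zs s @ [False,False,True] @ zs (2*m-1) @ rest)"
      unfolding z using hopR[of "zs s" s "zs (2*m-1) @ rest"] by (simp add: convh_def)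
    finally show "apply_hops (convh hs) (cfg @ True # rest) = Some ((zs (s+2) @ True # zs (2*m - 1)) @ rest)"
      by (simp add: replicate_app_Cons_same)
  qed
qed

lemma t1F: assumes "inv 1 s i cfg" shows "gstep 1 s i cfg False"
proof -
  from assms have m: "inv 1 s i cfg" .
  show ?thesis
  proof (rule gstepI[where s'="s" and hs="[]" and cfg'="zs (Suc i)"])
    show "inv (dfa 1 False) (s) (Suc i) (zs (Suc i))"
      using m by (auto simp: inv_def dfa_def dtab_def tf_def rep_num replicate_append_same replicate_app_Cons_same)
  qed (use m in \<open>auto simp: AS segs_Nil' inv_def tf_def rep_num replicate_append_same replicate_app_Cons_same\<close>)
qed

lemma t1T: assumes "inv 1 s i cfg" shows "gstep 1 s i cfg True"
proof -
  from assms have m: "inv 1 s i cfg" .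
  show ?thesis
  proof (rule gstepI[where s'="i" and hs="[]" and cfg'="zs i @ [True]"])
    show "inv (dfa 1 True) (i) (Suc i) (zs i @ [True])"
      using m by (auto simp: inv_def dfa_def dtab_def tf_def rep_num replicate_append_same replicate_app_Cons_same)
  qed (use m in \<open>auto simp: AS segs_Nil' inv_def tf_def rep_num replicate_append_same replicate_app_Cons_same\<close>)
qed

lemma t2F: assumes "inv 2 s i cfg" shows "gstep 2 s i cfg False"
proof -
  from assms have m: "inv 2 s i cfg" .
  show ?thesis
  proof (rule gstepI[where s'="s" and hs="[]" and cfg'="[True,False]"])
    show "inv (dfa 2 False) (s) (Suc i) ([True,False])"
      using m by (auto simp: inv_def dfa_def dtab_def tf_def rep_num replicate_append_same replicate_app_Cons_same)
  qed (use m in \<open>auto simp: AS segs_Nil' inv_def tf_def rep_num replicate_append_same replicate_app_Cons_same\<close>)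
qed

lemma t2T: assumes "inv 2 s i cfg" shows "gstep 2 s i cfg True"
proof -
  from assms have m: "inv 2 s i cfg" .
  show ?thesis
  proof (rule gstepI[where s'="s" and hs="[]" and cfg'="[True,True]"])
    show "inv (dfa 2 True) (s) (Suc i) ([True,True])"
      using m by (auto simp: inv_def dfa_def dtab_def tf_def rep_num replicate_append_same replicate_app_Cons_same)
  qed (use m in \<open>auto simp: AS segs_Nil' inv_def tf_def rep_num replicate_append_same replicate_app_Cons_same\<close>)
qed

lemma t3F: assumes "inv 3 s i cfg" shows "gstep 3 s i cfg False"
proof -
  from assms have m: "inv 3 s i cfg" .
  show ?thesis
  proof (rule gstepI[where s'="s" and hs="[]" and cfg'="zs s @ [True,False]"])
    show "inv (dfa 3 False) (s) (Suc i) (zs s @ [True,False])"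
      using m by (auto simp: inv_def dfa_def dtab_def tf_def rep_num replicate_append_same replicate_app_Cons_same)
  qed (use m in \<open>auto simp: AS segs_Nil' inv_def tf_def rep_num replicate_append_same replicate_app_Cons_same\<close>)
qed

lemma t3T: assumes "inv 3 s i cfg" shows "gstep 3 s i cfg True"
proof -
  from assms have m: "inv 3 s i cfg" .
  show ?thesis
  proof (rule gstepI[where s'="s" and hs="[]" and cfg'="zs s @ [True,True]"])
    show "inv (dfa 3 True) (s) (Suc i) (zs s @ [True,True])"
      using m by (auto simp: inv_def dfa_def dtab_def tf_def rep_num replicate_append_same replicate_app_Cons_same)
  qed (use m in \<open>auto simp: AS segs_Nil' inv_def tf_def rep_num replicate_append_same replicate_app_Cons_same\<close>)
qed

lemma t4F: assumes "inv 4 s i cfg" shows "gstep 4 s i cfg False"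
proof -
  from assms have m: "inv 4 s i cfg" .
  show ?thesis
  proof (rule gstepI[where s'="s" and hs="[]" and cfg'="zs s @ [True,False,False]"])
    show "inv (dfa 4 False) (s) (Suc i) (zs s @ [True,False,False])"
      using m by (auto simp: inv_def dfa_def dtab_def tf_def rep_num replicate_append_same replicate_app_Cons_same)
  qed (use m in \<open>auto simp: AS segs_Nil' inv_def tf_def rep_num replicate_append_same replicate_app_Cons_same\<close>)
qed

lemma t4T: assumes "inv 4 s i cfg" shows "gstep 4 s i cfg True"
proof -
  from assms have m: "inv 4 s i cfg" .
  show ?thesis
  proof (rule gstepI[where s'="s" and hs="[]" and cfg'="zs s @ [True,False,True]"])
    show "inv (dfa 4 True) (s) (Suc i) (zs s @ [True,False,True])"
      using m by (auto simp: inv_def dfa_def dtab_def tf_def rep_num replicate_append_same replicate_app_Cons_same)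
  qed (use m in \<open>auto simp: AS segs_Nil' inv_def tf_def rep_num replicate_append_same replicate_app_Cons_same\<close>)
qed

lemma t5T: assumes "inv 5 s i cfg" shows "gstep 5 s i cfg True"
proof -
  from assms have m: "inv 5 s i cfg" .
  show ?thesis
  proof (rule gstepI[where s'="s" and hs="[]" and cfg'="zs s @ [True,True,True]"])
    show "inv (dfa 5 True) (s) (Suc i) (zs s @ [True,True,True])"
      using m by (auto simp: inv_def dfa_def dtab_def tf_def rep_num replicate_append_same replicate_app_Cons_same)
  qed (use m in \<open>auto simp: AS segs_Nil' inv_def tf_def rep_num replicate_append_same replicate_app_Cons_same\<close>)
qed

lemma t6T: assumes "inv 6 s i cfg" shows "gstep 6 s i cfg True"
proof -
  from assms have m: "inv 6 s i cfg" .
  show ?thesis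
  proof (rule gstepI[where s'="s" and hs="[]" and cfg'="zs s @ [True,True,True]"])
    show "inv (dfa 6 True) (s) (Suc i) (zs s @ [True,True,True])"
      using m by (auto simp: inv_def dfa_def dtab_def tf_def rep_num replicate_append_same replicate_app_Cons_same)
  qed (use m in \<open>auto simp: AS segs_Nil' inv_def tf_def rep_num replicate_append_same replicate_app_Cons_same\<close>)
qed

lemma t7F: assumes "inv 7 s i cfg" shows "gstep 7 s i cfg False"
proof -
  from assms have m: "inv 7 s i cfg" .
  have m2: "i - s = Suc (i - Suc s)" using assms by (simp add: inv_def Suc_diff_Suc)
  show ?thesis
  proof (rule gstepI[where s'="s" and hs="[]" and cfg'="zs s @ True # zs (i - s)"])
    show "inv (dfa 7 False) (s) (Suc i) (zs s @ True # zs (i - s))"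
      using m m2 by (auto simp: inv_def dfa_def dtab_def tf_def rep_num replicate_append_same replicate_app_Cons_same)
  qed (use m m2 in \<open>auto simp: AS segs_Nil' inv_def tf_def rep_num replicate_append_same replicate_app_Cons_same\<close>)
qed

lemma t8F: assumes "inv 8 s i cfg" shows "gstep 8 s i cfg False"
proof -
  from assms have m: "inv 8 s i cfg" .
  show ?thesis
  proof (rule gstepI[where s'="s" and hs="[]" and cfg'="zs s @ tf 2"])
    show "inv (dfa 8 False) (s) (Suc i) (zs s @ tf 2)"
      using m by (auto simp: inv_def dfa_def dtab_def tf_def rep_num replicate_append_same replicate_app_Cons_same intro!: exI[of _ "2"])
  qed (use m in \<open>auto simp: AS segs_Nil' inv_def tf_def rep_num replicate_append_same replicate_app_Cons_same\<close>)
qed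

lemma t9F: assumes "inv 9 s i cfg" shows "gstep 9 s i cfg False"
proof -
  from assms have m: "inv 9 s i cfg" .
  show ?thesis
  proof (rule gstepI[where s'="s" and hs="[]" and cfg'="zs s @ ones 3 @ [False]"])
    show "inv (dfa 9 False) (s) (Suc i) (zs s @ ones 3 @ [False])"
      using m by (auto simp: inv_def dfa_def dtab_def tf_def rep_num replicate_append_same replicate_app_Cons_same intro!: exI[of _ "1"])
  qed (use m in \<open>auto simp: AS segs_Nil' inv_def tf_def rep_num replicate_append_same replicate_app_Cons_same\<close>)
qed

lemma t9T: assumes "inv 9 s i cfg" shows "gstep 9 s i cfg True"
proof -
  from assms have m: "inv 9 s i cfg" .
  show ?thesis
  proof (rule gstepI[where s'="s" and hs="[]" and cfg'="zs s @ ones 4"])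
    show "inv (dfa 9 True) (s) (Suc i) (zs s @ ones 4)"
      using m by (auto simp: inv_def dfa_def dtab_def tf_def rep_num replicate_append_same replicate_app_Cons_same)
  qed (use m in \<open>auto simp: AS segs_Nil' inv_def tf_def rep_num replicate_append_same replicate_app_Cons_same\<close>)
qed

lemma t12T: assumes "inv 12 s i cfg" shows "gstep 12 s i cfg True"
proof -
  from assms obtain m where m: "m \<ge> 1 \<and> i = s+2*m+2 \<and> cfg = zs s @ ones (2*m+1) @ [False]" by (auto simp: inv_def)
  show ?thesis
  proof (rule gstepI[where s'="s" and hs="[]" and cfg'="zs s @ ones (2*m+1) @ [False,True]"])
    show "inv (dfa 12 True) (s) (Suc i) (zs s @ ones (2*m+1) @ [False,True])"
      using m by (auto simp: inv_def dfa_def dtab_def tf_def rep_num replicate_append_same replicate_app_Cons_same intro!: exI[of _ "m"])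
  qed (use m in \<open>auto simp: AS segs_Nil' inv_def tf_def rep_num replicate_append_same replicate_app_Cons_same\<close>)
qed

lemma t13T: assumes "inv 13 s i cfg" shows "gstep 13 s i cfg True"
proof -
  from assms have m: "inv 13 s i cfg" .
  show ?thesis
  proof (rule gstepI[where s'="s" and hs="[]" and cfg'="zs s @ ones (2*2+1)"])
    show "inv (dfa 13 True) (s) (Suc i) (zs s @ ones (2*2+1))"
      using m by (auto simp: inv_def dfa_def dtab_def tf_def rep_num replicate_append_same replicate_app_Cons_same intro!: exI[of _ "2"])
  qed (use m in \<open>auto simp: AS segs_Nil' inv_def tf_def rep_num replicate_append_same replicate_app_Cons_same\<close>)
qed

lemma t14F: assumes "inv 14 s i cfg" shows "gstep 14 s i cfg False"
proof -
  from assms obtain m where m: "m \<ge> 2 \<and> i = s+2*m+1 \<and> cfg = zs s @ tf m @ [True]" by (auto simp: inv_def)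
  show ?thesis
  proof (rule gstepI[where s'="s" and hs="[]" and cfg'="zs s @ tf (Suc m)"])
    show "inv (dfa 14 False) (s) (Suc i) (zs s @ tf (Suc m))"
      using m by (auto simp: inv_def dfa_def dtab_def tf_Suc rep_num replicate_append_same replicate_app_Cons_same intro!: exI[of _ "Suc m"])
  qed (use m in \<open>auto simp: AS segs_Nil' inv_def tf_Suc rep_num replicate_append_same replicate_app_Cons_same\<close>)
qed

lemma t16F: assumes "inv 16 s i cfg" shows "gstep 16 s i cfg False"
proof -
  from assms obtain m where m: "m \<ge> 2 \<and> i = s+2*m+1 \<and> cfg = zs s @ ones (2*m+1)" by (auto simp: inv_def)
  show ?thesis
  proof (rule gstepI[where s'="s" and hs="[]" and cfg'="zs s @ ones (2*m+1) @ [False]"])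
    show "inv (dfa 16 False) (s) (Suc i) (zs s @ ones (2*m+1) @ [False])"
      using m by (auto simp: inv_def dfa_def dtab_def tf_def rep_num replicate_append_same replicate_app_Cons_same intro!: exI[of _ "m"])
  qed (use m in \<open>auto simp: AS segs_Nil' inv_def tf_def rep_num replicate_append_same replicate_app_Cons_same\<close>)
qed

lemma t16T: assumes "inv 16 s i cfg" shows "gstep 16 s i cfg True"
proof -
  from assms obtain m where m: "m \<ge> 2 \<and> i = s+2*m+1 \<and> cfg = zs s @ ones (2*m+1)" by (auto simp: inv_def)
  show ?thesis
  proof (rule gstepI[where s'="s" and hs="[]" and cfg'="zs s @ ones (2*(Suc m))"])
    show "inv (dfa 16 True) (s) (Suc i) (zs s @ ones (2*(Suc m)))"
      using m by (auto simp: inv_def dfa_def dtab_def tf_def rep_num replicate_append_same replicate_app_Cons_same intro!: exI[of _ "Suc m"])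
  qed (use m in \<open>auto simp: AS segs_Nil' inv_def tf_def rep_num replicate_append_same replicate_app_Cons_same\<close>)
qed

lemma t17T: assumes "inv 17 s i cfg" shows "gstep 17 s i cfg True"
proof -
  from assms obtain m where m: "m \<ge> 3 \<and> i = s+2*m \<and> cfg = zs s @ ones (2*m)" by (auto simp: inv_def)
  show ?thesis
  proof (rule gstepI[where s'="s" and hs="[]" and cfg'="zs s @ ones (2*m+1)"])
    show "inv (dfa 17 True) (s) (Suc i) (zs s @ ones (2*m+1))"
      using m by (auto simp: inv_def dfa_def dtab_def tf_def rep_num replicate_append_same replicate_app_Cons_same intro!: exI[of _ "m"])
  qed (use m in \<open>auto simp: AS segs_Nil' inv_def tf_def rep_num replicate_append_same replicate_app_Cons_same\<close>)
qed


lemma t5F: assumes "inv 5 s i cfg" shows "gstep 5 s i cfg False"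
proof -
  from assms have m: "s = 0" "i = 2" "cfg = [True,True]" by (auto simp: inv_def)
  show ?thesis
  proof (rule gstepI[where s'="s+2" and hs="[(int s, False)]" and cfg'="zs (s+2) @ [True]"])
    fix rest
    show "apply_hops (convh [(int s, False)]) (cfg @ False # rest) = Some ((zs (s+2) @ [True]) @ rest)"
      using m hopR[of "[]" 0 rest] by simp
  qed (use m in \<open>auto simp: AS segs_Nil' segs_one inv_def\<close>)
qed

lemma t6F: assumes "inv 6 s i cfg" shows "gstep 6 s i cfg False"
proof -
  from assms have m: "s \<ge> 1" "i = s+2" "cfg = zs s @ [True,True]" by (auto simp: inv_def)
  show ?thesis
  proof (rule gstepI[where s'="s+2" and hs="[(int s, False)]" and cfg'="zs (s+2) @ [True]"])
    fix rest
    show "apply_hops (convh [(int s, False)]) (cfg @ False # rest) = Some ((zs (s+2) @ [True]) @ rest)"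
      using m hopR[of "zs s" s rest] by (simp add: replicate_app_Cons_same)
  qed (use m in \<open>auto simp: AS segs_Nil' segs_one inv_def\<close>)
qed

lemma t8T: assumes "inv 8 s i cfg" shows "gstep 8 s i cfg True"
proof -
  from assms have m: "i = s+3" "cfg = zs s @ [True,False,True]" by (auto simp: inv_def)
  show ?thesis
  proof (rule gstepI[where s'="s+2" and hs="[(int s + 1, True), (int s, False)]" and cfg'="zs (s+2) @ [True,False]"])
    fix rest
    have "apply_hop (s+1, True) (cfg @ True # rest) = Some (zs s @ [True,True,False,False] @ rest)"
      using m hopL[of "zs s @ [True]" "s+1" rest] by simp
    moreover have "apply_hop (s, False) (zs s @ [True,True,False,False] @ rest) = Some (zs s @ [False,False,True,False] @ rest)"
      using hopR[of "zs s" s "False # rest"] by simp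
    ultimately show "apply_hops (convh [(int s + 1, True), (int s, False)]) (cfg @ True # rest) = Some ((zs (s+2) @ [True,False]) @ rest)"
      by (simp add: replicate_app_Cons_same nat_add_distrib)
  qed (use m in \<open>auto simp: AS segs_Nil' segs_one inv_def segs_Cons segs_Nil\<close>)
qed

lemma t13F: assumes "inv 13 s i cfg" shows "gstep 13 s i cfg False"
proof -
  from assms have m: "i = s+4" "cfg = zs s @ ones 4" by (auto simp: inv_def)
  show ?thesis
  proof (rule gstepI[where s'="s+2" and hs="[(int s + 2, False), (int s, False)]" and cfg'="zs (s+2) @ [True,False,True]"])
    fix rest
    have "apply_hop (s+2, False) (cfg @ False # rest) = Some (zs s @ [True,True,False,False,True] @ rest)"
      using m hopR[of "zs s @ [True,True]" "s+2" rest] by (simp add: rep_num)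
    moreover have "apply_hop (s, False) (zs s @ [True,True,False,False,True] @ rest) = Some (zs s @ [False,False,True,False,True] @ rest)"
      using hopR[of "zs s" s "[False,True] @ rest"] by simp
    ultimately show "apply_hops (convh [(int s + 2, False), (int s, False)]) (cfg @ False # rest) = Some ((zs (s+2) @ [True,False,True]) @ rest)"
      by (simp add: replicate_app_Cons_same nat_add_distrib)
  qed (use m in \<open>auto simp: AS segs_Nil' segs_one inv_def segs_Cons segs_Nil\<close>)
qed

lemma t15T: assumes "inv 15 s i cfg" shows "gstep 15 s i cfg True"
proof -
  from assms obtain j where m: "j \<ge> 1" "i = s + 2*j + 3" "cfg = zs s @ ones (2*j+1) @ [False,True]" by (auto simp: inv_def)
  define hs where "hs = [(int s + 2 * int j + 1, True)] @ segs (int s + 2 * int (Suc j) - 2) (int s) False"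
  show ?thesis
  proof (rule gstepI[where s'="s+2" and hs=hs and cfg'="zs (s+2) @ tf (Suc j)"])
    show "astep (int i) (if True then 1 else 0) (15, int s, []) = (dfa 15 True, int (s + 2), hs)"
      using m by (simp add: AS hs_def segs_one)
    show "inv (dfa 15 True) (s+2) (Suc i) (zs (s+2) @ tf (Suc j))"
      using m by (auto simp: inv_def dfa_def dtab_def intro!: exI[of _ "Suc j"])
    show "step_proper (int i) 15 (if True then 1 else 0) (int s)"
      using m by (simp add: AS)
    show "\<forall>x\<in>set hs. fst x \<ge> 0" unfolding hs_def segs_def by auto
    fix rest
    have h1: "apply_hop (s + 2*j + 1, True) (cfg @ True # rest) = Some (zs s @ ones (2 * Suc j) @ [False] @ ([False] @ rest))"
      using m hopL[of "zs s @ ones (2*j+1)" "s + 2*j + 1" rest] by (simp add: ones_TT0 replicate_append_same)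
    have "apply_hops (convh hs) (cfg @ True # rest)
        = apply_hops (convh (segs (int s + 2 * int (Suc j) - 2) (int s) False)) (zs s @ ones (2 * Suc j) @ [False] @ ([False] @ rest))"
    proof -
      have n: "nat (int s + 2 * int j + 1) = s + 2*j + 1" by simp
      show ?thesis unfolding hs_def
        by (simp only: convh_simps append_Cons append_Nil apply_hops.simps n h1 option.case)
    qed
    also have "\<dots> = Some (zs s @ [False] @ ft (Suc j) @ ([False] @ rest))"
      by (rule casc2) simp
    also have "\<dots> = Some ((zs (s+2) @ tf (Suc j)) @ rest)"
      using ft_F[of "Suc j"] by (simp add: replicate_app_Cons_same)
    finally show "apply_hops (convh hs) (cfg @ True # rest) = Some ((zs (s+2) @ tf (Suc j)) @ rest)" .
  qed
qed

lemma t17F: assumes "inv 17 s i cfg" shows "gstep 17 s i cfg False"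
proof -
  from assms obtain j where m: "j \<ge> 3" "i = s + 2*j" "cfg = zs s @ ones (2*j)" by (auto simp: inv_def)
  define hs where "hs = segs (int s + 2 * int j - 2) (int s) False"
  obtain k where k: "j = Suc k" using m by (cases j) auto
  show ?thesis
  proof (rule gstepI[where s'="s+2" and hs=hs and cfg'="zs (s+2) @ tf k @ [True]"])
    show "astep (int i) (if False then 1 else 0) (17, int s, []) = (dfa 17 False, int (s + 2), hs)"
      using m by (simp add: AS hs_def segs_Nil')
    show "inv (dfa 17 False) (s+2) (Suc i) (zs (s+2) @ tf k @ [True])"
      using m k by (auto simp: inv_def dfa_def dtab_def intro!: exI[of _ k])
    show "step_proper (int i) 17 (if False then 1 else 0) (int s)"
      using m by (simp add: AS)
    show "\<forall>x\<in>set hs. fst x \<ge> 0" unfolding hs_def segs_def by auto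
    fix rest
    have "apply_hops (convh hs) (cfg @ False # rest) = Some (zs s @ [False] @ ft j @ rest)"
      unfolding hs_def using m casc2[of "zs s" s j rest] by simp
    also have "\<dots> = Some ((zs (s+2) @ tf k @ [True]) @ rest)"
      using ft_F[of k] by (simp add: k ft_Suc replicate_app_Cons_same)
    finally show "apply_hops (convh hs) (cfg @ False # rest) = Some ((zs (s+2) @ tf k @ [True]) @ rest)" .
  qed
qed

lemma gstep_all: assumes "inv q s i cfg" "dfa q bb \<noteq> 10" shows "gstep q s i cfg bb"
proof -
  have q: "q \<in> {0,1,2,3,4,5,6,7,8,9,11,12,13,14,15,16,17}"
    using assms(1) by (auto simp: inv_def split: if_splits)
  show ?thesis
  proof (cases bb)
    case True
    with q assms show ?thesis
      using t0T t1T t2T t3T t4T t5T t6T t8T t9T t11T t12T t13T t14T t15T t16T t17T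
      by (auto simp: dfa_def dtab_def)
  next
    case False
    with q assms show ?thesis
      using t0F t1F t2F t3F t4F t5F t6F t7F t8F t9F t13F t14F t16F t17F
      by (auto simp: dfa_def dtab_def)
  qed
qed

lemma pegs_append: "pegs (a @ b) = pegs a + pegs b" by (simp add: pegs_def)
lemma pegs_zs[simp]: "pegs (zs k) = 0" by (simp add: pegs_def)

lemma final_ok: assumes "inv q s i cfg" "acc q"
  shows "\<exists>hs cfg'. snd (snd (astep (int i) 2 (q, int s, []))) = hs
     \<and> apply_hops (convh hs) cfg = Some cfg' \<and> pegs cfg' = 1 \<and> (\<forall>x\<in>set hs. fst x \<ge> 0)
     \<and> step_proper (int i) q 2 (int s)"
proof -
  have q: "q \<in> {2,3,4,6,7}" using assms(2) by (simp add: acc_def)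
  show ?thesis
  proof (cases "q = 6")
    case True
    with assms have m: "s \<ge> 1" "i = s+2" "cfg = zs s @ [True,True]" by (auto simp: inv_def)
    obtain t where t: "s = Suc t" using m by (cases s) auto
    have e: "snd (snd (astep (int i) 2 (q, int s, []))) = [(int t, True)]"
      using m t True by (simp add: AS segs_one segs_Nil')
    have "apply_hops (convh [(int t, True)]) cfg = Some (zs t @ [True,False,False])"
      using m t hopL[of "zs t" t "[]"] by (simp add: replicate_app_Cons_same)
    moreover have "step_proper (int i) q 2 (int s)" using m t True by (simp add: AS)
    ultimately show ?thesis using e by (auto simp: pegs_append)
  next
    case False
    then have q': "q \<in> {2,3,4,7}" using q by auto
    have e: "snd (snd (astep (int i) 2 (q, int s, []))) = []"
      using q' by (auto simp: AS segs_Nil')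
    have sp: "step_proper (int i) q 2 (int s)" using q' by (auto simp: AS)
    have "pegs cfg = 1" using q' assms(1) by (auto simp: inv_def pegs_append)
    then show ?thesis using e sp by auto
  qed
qed

definition bitv :: "bool list \<Rightarrow> nat \<Rightarrow> nat" where "bitv w i = (if w ! i then 1 else 0)"

definition arun :: "bool list \<Rightarrow> nat \<Rightarrow> nat \<times> int \<times> (int \<times> bool) list" where
  "arun w k = foldl (\<lambda>st i. astep (int i) (bitv w i) st) (0, 0, []) [0..<k]"

lemma arun_0: "arun w 0 = (0, 0, [])" by (simp add: arun_def)
lemma arun_Suc: "arun w (Suc k) = astep (int k) (bitv w k) (arun w k)" by (simp add: arun_def)

definition afin :: "bool list \<Rightarrow> nat \<times> int \<times> (int \<times> bool) list" where
  "afin w = astep (int (length w)) 2 (arun w (length w))"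

lemma astep_app: "astep i b (q, s, out) = (fst (astep i b (q, s, [])), fst (snd (astep i b (q, s, []))),
   out @ snd (snd (astep i b (q, s, []))))"
  by (simp add: astep_def Let_def)

definition AI :: "bool list \<Rightarrow> nat \<Rightarrow> nat \<times> int \<times> (int \<times> bool) list \<Rightarrow> bool" where
  "AI w k st \<longleftrightarrow> (\<exists>sn cfg. fst (snd st) = int sn \<and> inv (fst st) sn k cfg
      \<and> apply_hops (convh (snd (snd st))) w = Some (cfg @ drop k w)
      \<and> fst st = runD 0 (take k w) \<and> (\<forall>x\<in>set (snd (snd st)). fst x \<ge> 0))"

lemma runD_dead: "runD 10 w = 10"
  by (induction w) (auto simp: dfa_def dtab_def)

lemma AI_0: "AI w 0 (arun w 0)"
  by (auto simp: AI_def arun_0 inv_def)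

lemma AI_step: assumes "AI w k st" "k < length w" "acc (runD 0 w)"
  shows "AI w (Suc k) (astep (int k) (bitv w k) st) \<and> step_proper (int k) (fst st) (bitv w k) (fst (snd st))"
proof -
  obtain q s out where st: "st = (q, s, out)" by (cases st) auto
  from assms(1) obtain sn cfg where s: "s = int sn" and iv: "inv q sn k cfg"
    and ap: "apply_hops (convh out) w = Some (cfg @ drop k w)" and qr: "q = runD 0 (take k w)"
    and nn: "\<forall>x\<in>set out. fst x \<ge> 0"
    by (auto simp: AI_def st)
  have dk: "drop k w = w ! k # drop (Suc k) w" using assms(2) by (simp add: Cons_nth_drop_Suc)
  have tk: "take (Suc k) w = take k w @ [w ! k]" using assms(2) by (simp add: take_Suc_conv_app_nth)
  have "runD 0 w = runD (dfa q (w ! k)) (drop (Suc k) w)"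
    using qr by (metis append_take_drop_id dk runD_simps(2) runD_simps(3))
  then have nd: "dfa q (w ! k) \<noteq> 10" using assms(3) runD_dead[of "drop (Suc k) w"]
    by (auto simp: acc_def)
  from gstep_all[OF iv nd] obtain s' hs cfg' where
    g: "astep (int k) (if w ! k then 1 else 0) (q, int sn, []) = (dfa q (w ! k), int s', hs)"
    "\<And>rest. apply_hops (convh hs) (cfg @ (w ! k) # rest) = Some (cfg' @ rest)"
    "inv (dfa q (w ! k)) s' (Suc k) cfg'" "\<forall>x\<in>set hs. fst x \<ge> 0"
    "step_proper (int k) q (if w ! k then 1 else 0) (int sn)"
    unfolding gstep_def by blast
  have b: "bitv w k = (if w ! k then 1 else 0)" by (simp add: bitv_def)
  have e: "astep (int k) (bitv w k) st = (dfa q (w ! k), int s', out @ hs)"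
    unfolding st s b by (subst astep_app) (simp add: g(1))
  have "apply_hops (convh (out @ hs)) w = Some (cfg' @ drop (Suc k) w)"
    using ap g(2) by (simp add: apply_hops_append dk)
  moreover have "dfa q (w ! k) = runD 0 (take (Suc k) w)" using qr tk by simp
  ultimately have "AI w (Suc k) (astep (int k) (bitv w k) st)"
    unfolding AI_def e using g(3,4) nn by auto
  then show ?thesis using g(5) by (simp add: st s b)
qed

lemma AI_all: "acc (runD 0 w) \<Longrightarrow> k \<le> length w \<Longrightarrow> AI w k (arun w k)"
proof (induction k)
  case 0 then show ?case using AI_0 by simp
next
  case (Suc k) then show ?case using AI_step[of w k "arun w k"] by (simp add: arun_Suc)
qed

lemma arun_proper: "acc (runD 0 w) \<Longrightarrow> k < length w \<Longrightarrow>
   step_proper (int k) (fst (arun w k)) (bitv w k) (fst (snd (arun w k)))"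
  using AI_step[of w k "arun w k"] AI_all[of w k] by simp

theorem alg_correct: assumes "acc (runD 0 w)"
  shows "\<exists>w'. apply_hops (convh (snd (snd (afin w)))) w = Some w' \<and> pegs w' = 1
    \<and> (\<forall>x\<in>set (snd (snd (afin w))). fst x \<ge> 0)
    \<and> step_proper (int (length w)) (fst (arun w (length w))) 2 (fst (snd (arun w (length w))))"
proof -
  obtain q s out where st: "arun w (length w) = (q, s, out)" by (cases "arun w (length w)") auto
  from AI_all[OF assms le_refl] obtain sn cfg where s: "s = int sn" and iv: "inv q sn (length w) cfg"
    and ap: "apply_hops (convh out) w = Some cfg" and qr: "q = runD 0 w"
    and nn: "\<forall>x\<in>set out. fst x \<ge> 0"
    by (auto simp: AI_def st)
  from final_ok[OF iv] assms qr obtain hs cfg' where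
    f: "snd (snd (astep (int (length w)) 2 (q, int sn, []))) = hs"
     "apply_hops (convh hs) cfg = Some cfg'" "pegs cfg' = 1" "\<forall>x\<in>set hs. fst x \<ge> 0"
     "step_proper (int (length w)) q 2 (int sn)" by blast
  have e: "snd (snd (afin w)) = out @ hs"
    unfolding afin_def st s by (subst astep_app) (simp add: f(1))
  show ?thesis using ap f nn by (auto simp: e apply_hops_append st s)
qed

definition mainc :: "instr list" where
  "mainc = [Jmp 99,
   LoadConst 8 1,
   LoadConst 9 2,
   LoadI 3 0,
   AddI 18 3 0,
   LoadConst 17 (-1000),
   Jz 18 12,
   LoadI 2 18,
   SubI 13 17 18,
   StoreI 13 2,
   SubI 18 18 8,
   Jmp 6,
   SubI 12 4 3,
   Jz 12 18,
   LoadConst 17 (-1001),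
   SubI 13 17 4,
   LoadI 10 13,
   Jmp 19,
   LoadConst 10 2,
   AddI 11 5 5,
   AddI 11 11 5,
   AddI 11 11 10,
   LoadConst 17 (-65),
   SubI 13 17 11,
   LoadI 12 13,
   Jz 12 27,
   AddI 6 4 0,
   LoadConst 17 (-193),
   SubI 13 17 11,
   LoadI 12 13,
   AddI 14 6 0,
   Jz 12 33,
   AddI 14 4 0,
   LoadConst 17 (-257),
   SubI 13 17 11,
   LoadI 12 13,
   AddI 14 14 12,
   SubI 14 14 9,
   LoadConst 17 (-321),
   SubI 13 17 11,
   LoadI 12 13,
   AddI 15 6 0,
   Jz 12 44,
   AddI 15 4 0,
   LoadConst 17 (-385),
   SubI 13 17 11,
   LoadI 12 13,
   AddI 15 15 12,
   LoadConst 17 (-449),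
   SubI 13 17 11,
   LoadI 16 13,
   SubI 12 14 15,
   AddI 12 12 9,
   Jz 12 62,
   AddI 13 7 7,
   AddI 13 13 8,
   StoreI 13 14,
   AddI 13 13 8,
   StoreI 13 16,
   AddI 7 7 8,
   SubI 14 14 9,
   Jmp 51,
   LoadConst 17 (-513),
   SubI 13 17 11,
   LoadI 12 13,
   AddI 14 6 0,
   Jz 12 68,
   AddI 14 4 0,
   LoadConst 17 (-577),
   SubI 13 17 11,
   LoadI 12 13,
   AddI 14 14 12,
   SubI 14 14 9,
   AddI 15 6 0,
   LoadConst 16 0,
   SubI 12 14 15,
   AddI 12 12 9,
   Jz 12 86,
   AddI 13 7 7,
   AddI 13 13 8,
   StoreI 13 14,
   AddI 13 13 8,
   StoreI 13 16,
   AddI 7 7 8,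
   SubI 14 14 9,
   Jmp 75,
   LoadConst 17 (-129),
   SubI 13 17 11,
   LoadI 12 13,
   AddI 6 6 12,
   LoadConst 17 (-1),
   SubI 13 17 11,
   LoadI 5 13,
   SubI 12 4 3,
   Jz 12 97,
   AddI 4 4 8,
   Jmp 12,
   StoreI 0 7,
   Halt]"

definition taddr :: "nat \<Rightarrow> nat \<Rightarrow> int" where
  "taddr f e = - (1 + 64 * int f + int e)"

definition tentries :: "(int \<times> int) list" where
  "tentries = [(taddr f (3*q+b), fv f q b). f \<leftarrow> [0..<10], q \<leftarrow> [0..<18], b \<leftarrow> [0..<3], fv f q b \<noteq> 0]"

definition initL :: "(int \<times> int) list \<Rightarrow> instr list" where
  "initL L = concat (map (\<lambda>(a,v). [LoadConst 1 a, LoadConst 2 v, StoreI 1 2]) L)"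

definition PP :: "instr list" where
  "PP = mainc @ initL tentries @ [Jmp 1]"

definition exec_i :: "instr \<Rightarrow> ram_state \<Rightarrow> ram_state" where
  "exec_i ins s = (case ins of
        LoadConst r k \<Rightarrow> s\<lparr>pc := pc s + 1, regs := (regs s)(r := k)\<rparr>
      | AddI r a b \<Rightarrow> s\<lparr>pc := pc s + 1, regs := (regs s)(r := regs s a + regs s b)\<rparr>
      | SubI r a b \<Rightarrow> s\<lparr>pc := pc s + 1, regs := (regs s)(r := regs s a - regs s b)\<rparr>
      | LoadI r a \<Rightarrow> s\<lparr>pc := pc s + 1, regs := (regs s)(r := mem s (regs s a))\<rparr>
      | StoreI a r \<Rightarrow> s\<lparr>pc := pc s + 1, mem := (mem s)(regs s a := regs s r)\<rparr>
      | Jz r l \<Rightarrow> s\<lparr>pc := (if regs s r = 0 then l else pc s + 1)\<rparr>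
      | Jmp l \<Rightarrow> s\<lparr>pc := l\<rparr>
      | Halt \<Rightarrow> s)"

lemma len_mainc: "length mainc = 99" by (simp add: mainc_def)

lemma mainc_nohalt: "\<forall>k<98. mainc ! k \<noteq> Halt"
  unfolding all18 by (simp add: mainc_def upt_rec)

lemma PP_main: "k < 99 \<Longrightarrow> PP ! k = mainc ! k"
  by (simp add: PP_def nth_append len_mainc)

lemma exec1_P: "pc s < 98 \<Longrightarrow> exec1 PP s = exec_i (mainc ! pc s) s"
proof -
  assume a: "pc s < 98"
  have "\<not> halted PP s" using a mainc_nohalt PP_main[of "pc s"]
    by (auto simp: halted_def PP_def len_mainc)
  then show ?thesis using a by (simp add: exec1_def exec_i_def PP_main split: instr.splits)
qed

lemma fpn: "(f ^^ numeral k) s = (f ^^ pred_numeral k) (f s)"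
  by (simp only: numeral_eq_Suc funpow_Suc_right comp_def)

lemma fp_add: "(f ^^ (a + b)) s = (f ^^ b) ((f ^^ a) s)"
  by (subst add.commute) (simp add: funpow_add)

lemmas EX = exec1_P exec_i_def mainc_def fpn

definition emitc :: "nat \<Rightarrow> instr list" where
  "emitc ofs = [SubI 12 14 15, AddI 12 12 9, Jz 12 (ofs+11), AddI 13 7 7, AddI 13 13 8, StoreI 13 14,
     AddI 13 13 8, StoreI 13 16, AddI 7 7 8, SubI 14 14 9, Jmp ofs]"

fun wout :: "(int \<Rightarrow> int) \<Rightarrow> nat \<Rightarrow> (int \<times> int) list \<Rightarrow> (int \<Rightarrow> int)" where
  "wout m J [] = m"
| "wout m J ((x,d) # r) = wout (m(int J + int J + 1 := x, int J + int J + 1 + 1 := d)) (Suc J) r"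

fun eseg :: "int \<Rightarrow> nat \<Rightarrow> int list" where
  "eseg hi 0 = []"
| "eseg hi (Suc c) = hi # eseg (hi - 2) c"

lemma emit_loop_51:
  shows "pc s = 51 \<Longrightarrow> regs s 8 = 1 \<Longrightarrow> regs s 9 = 2 \<Longrightarrow> regs s 14 = hi \<Longrightarrow> regs s 15 = lo
    \<Longrightarrow> regs s 16 = d \<Longrightarrow> regs s 7 = int J \<Longrightarrow> hi = lo - 2 + 2 * int c \<Longrightarrow>
    pc ((exec1 PP ^^ (11*c+3)) s) = 62 \<and> regs ((exec1 PP ^^ (11*c+3)) s) 7 = int (J + c)
    \<and> mem ((exec1 PP ^^ (11*c+3)) s) = wout (mem s) J (map (\<lambda>x. (x,d)) (eseg hi c))
    \<and> (\<forall>r. r \<notin> {7,12,13,14} \<longrightarrow> regs ((exec1 PP ^^ (11*c+3)) s) r = regs s r)"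
proof (induction c arbitrary: s J hi)
  case 0
  show ?case using 0 by (simp add: EX)
next
  case (Suc c)
  define s1 where "s1 = (exec1 PP ^^ 11) s"
  have s1: "pc s1 = 51" "regs s1 8 = 1" "regs s1 9 = 2" "regs s1 14 = hi - 2" "regs s1 15 = lo"
    "regs s1 16 = d" "regs s1 7 = int (Suc J)" "mem s1 = (mem s)(int J + int J + 1 := hi, int J + int J + 1 + 1 := d)"
    "\<forall>r. r \<notin> {7,12,13,14} \<longrightarrow> regs s1 r = regs s r"
    using Suc.prems unfolding s1_def by (simp_all add: EX)
  have e: "11 * Suc c + 3 = 11 + (11 * c + 3)" by simp
  have fe: "(exec1 PP ^^ (11 * Suc c + 3)) s = (exec1 PP ^^ (11*c+3)) s1"
    unfolding e s1_def by (rule fp_add)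
  have h: "hi - 2 = lo - 2 + 2 * int c" using Suc.prems by simp
  note IH = Suc.IH[OF s1(1-7) h]
  show ?case unfolding fe using IH s1 by (simp add: fun_upd_def)
qed

lemma emit_loop_75:
  shows "pc s = 75 \<Longrightarrow> regs s 8 = 1 \<Longrightarrow> regs s 9 = 2 \<Longrightarrow> regs s 14 = hi \<Longrightarrow> regs s 15 = lo
    \<Longrightarrow> regs s 16 = d \<Longrightarrow> regs s 7 = int J \<Longrightarrow> hi = lo - 2 + 2 * int c \<Longrightarrow>
    pc ((exec1 PP ^^ (11*c+3)) s) = 86 \<and> regs ((exec1 PP ^^ (11*c+3)) s) 7 = int (J + c)
    \<and> mem ((exec1 PP ^^ (11*c+3)) s) = wout (mem s) J (map (\<lambda>x. (x,d)) (eseg hi c))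
    \<and> (\<forall>r. r \<notin> {7,12,13,14} \<longrightarrow> regs ((exec1 PP ^^ (11*c+3)) s) r = regs s r)"
proof (induction c arbitrary: s J hi)
  case 0
  show ?case using 0 by (simp add: EX)
next
  case (Suc c)
  define s1 where "s1 = (exec1 PP ^^ 11) s"
  have s1: "pc s1 = 75" "regs s1 8 = 1" "regs s1 9 = 2" "regs s1 14 = hi - 2" "regs s1 15 = lo"
    "regs s1 16 = d" "regs s1 7 = int (Suc J)" "mem s1 = (mem s)(int J + int J + 1 := hi, int J + int J + 1 + 1 := d)"
    "\<forall>r. r \<notin> {7,12,13,14} \<longrightarrow> regs s1 r = regs s r"
    using Suc.prems unfolding s1_def by (simp_all add: EX)
  have e: "11 * Suc c + 3 = 11 + (11 * c + 3)" by simp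
  have fe: "(exec1 PP ^^ (11 * Suc c + 3)) s = (exec1 PP ^^ (11*c+3)) s1"
    unfolding e s1_def by (rule fp_add)
  have h: "hi - 2 = lo - 2 + 2 * int c" using Suc.prems by simp
  note IH = Suc.IH[OF s1(1-7) h]
  show ?case unfolding fe using IH s1 by (simp add: fun_upd_def)
qed



definition fvE :: "nat \<Rightarrow> nat \<Rightarrow> int" where "fvE f e = fv f (e div 3) (e mod 3)"

definition TAB :: "(int \<Rightarrow> int) \<Rightarrow> bool" where
  "TAB m \<longleftrightarrow> (\<forall>f<10. \<forall>e<54. m (-(1 + 64 * int f) - int e) = fvE f e)"

lemma TABl: "TAB m \<Longrightarrow> f < 10 \<Longrightarrow> e < 54 \<Longrightarrow> m (-(1 + 64 * int f) - int e) = fvE f e"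
  by (simp add: TAB_def)

lemmas TABs = TABl[of _ 0, simplified] TABl[of _ 1, simplified] TABl[of _ 2, simplified]
  TABl[of _ 3, simplified] TABl[of _ 4, simplified] TABl[of _ 5, simplified] TABl[of _ 6, simplified]
  TABl[of _ 7, simplified] TABl[of _ 8, simplified] TABl[of _ 9, simplified]

lemma blkA: assumes "pc s = 22" "regs s 0 = 0" "regs s 11 = int e" "e < 54" "TAB (mem s)" "regs s 9 = 2"
  defines "t \<equiv> (if fvE 1 e = 0 then 4 else 5) + (if fvE 3 e = 0 then 5 else 6) + 5 + (if fvE 5 e = 0 then 5 else 6) + 7"
  defines "s1 \<equiv> (if fvE 1 e \<noteq> 0 then regs s 4 else regs s 6)"
  shows "pc ((exec1 PP ^^ t) s) = 51 \<and> regs ((exec1 PP ^^ t) s) 6 = s1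
    \<and> regs ((exec1 PP ^^ t) s) 14 = (if fvE 3 e \<noteq> 0 then regs s 4 else s1) + fvE 4 e - 2
    \<and> regs ((exec1 PP ^^ t) s) 15 = (if fvE 5 e \<noteq> 0 then regs s 4 else s1) + fvE 6 e
    \<and> regs ((exec1 PP ^^ t) s) 16 = fvE 7 e \<and> mem ((exec1 PP ^^ t) s) = mem s
    \<and> (\<forall>r\<in>{0,3,4,5,7,8,9,11}. regs ((exec1 PP ^^ t) s) r = regs s r)"
  using assms unfolding t_def s1_def
  by (cases "fvE 1 e = 0"; cases "fvE 3 e = 0"; cases "fvE 5 e = 0") (simp_all add: EX TABs)

lemma blkB: assumes "pc s = 62" "regs s 0 = 0" "regs s 11 = int e" "e < 54" "TAB (mem s)" "regs s 9 = 2"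
  defines "t \<equiv> (if fvE 8 e = 0 then 5 else 6) + 7"
  shows "pc ((exec1 PP ^^ t) s) = 75
    \<and> regs ((exec1 PP ^^ t) s) 14 = (if fvE 8 e \<noteq> 0 then regs s 4 else regs s 6) + fvE 9 e - 2
    \<and> regs ((exec1 PP ^^ t) s) 15 = regs s 6
    \<and> regs ((exec1 PP ^^ t) s) 16 = 0 \<and> mem ((exec1 PP ^^ t) s) = mem s
    \<and> (\<forall>r\<in>{0,3,4,5,6,7,8,9,11}. regs ((exec1 PP ^^ t) s) r = regs s r)"
  using assms unfolding t_def
  by (cases "fvE 8 e = 0") (simp_all add: EX TABs)

lemma blkC: assumes "pc s = 86" "regs s 0 = 0" "regs s 11 = int e" "e < 54" "TAB (mem s)"
  shows "pc ((exec1 PP ^^ 7) s) = 93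
    \<and> regs ((exec1 PP ^^ 7) s) 6 = regs s 6 + fvE 2 e
    \<and> regs ((exec1 PP ^^ 7) s) 5 = fvE 0 e \<and> mem ((exec1 PP ^^ 7) s) = mem s
    \<and> (\<forall>r\<in>{0,3,4,7,8,9}. regs ((exec1 PP ^^ 7) s) r = regs s r)"
  using assms by (simp add: EX TABs)

lemma blkE: assumes "pc s = 19" "regs s 5 = int q" "regs s 10 = int b"
  shows "pc ((exec1 PP ^^ 3) s) = 22 \<and> regs ((exec1 PP ^^ 3) s) 11 = int (3*q+b)
    \<and> mem ((exec1 PP ^^ 3) s) = mem s
    \<and> (\<forall>r\<in>{0,3,4,5,6,7,8,9}. regs ((exec1 PP ^^ 3) s) r = regs s r)"
  using assms by (simp add: EX)

lemma wout_append: "wout m J (xs @ ys) = wout (wout m J xs) (J + length xs) ys"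
  by (induction m J xs rule: wout.induct) (simp_all add: fun_upd_def)

lemma wout_low: "a \<le> 0 \<Longrightarrow> wout m J xs a = m a"
  by (induction m J xs rule: wout.induct) auto

lemma TAB_wout: "TAB m \<Longrightarrow> TAB (wout m J xs)"
  unfolding TAB_def by (simp add: wout_low)

lemma fvE_qb: "b < 3 \<Longrightarrow> fvE f (3*q+b) = fv f q b"
  by (simp add: fvE_def)

lemma segs_eseg: "segs hi lo d = map (\<lambda>x. (x, d)) (eseg hi (nat ((hi - lo) div 2 + 1)))"
proof -
  have "\<And>hi. map (\<lambda>k. (hi - 2 * int k, d)) [0..<c] = map (\<lambda>x. (x, d)) (eseg hi c)" for c
  proof (induction c)
    case 0 then show ?case by simp
  next
    case (Suc c)
    have "map (\<lambda>k. (hi - 2 * int k, d)) [0..<Suc c] = (hi, d) # map (\<lambda>k. (hi - 2 - 2 * int k, d)) [0..<c]" for hi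
      by (simp add: upt_conv_Cons map_Suc_upt[symmetric] del: upt_Suc)
    then show ?case using Suc by simp
  qed
  then show ?thesis by (simp add: segs_def)
qed

lemma length_eseg[simp]: "length (eseg hi c) = c"
  by (induction c arbitrary: hi) auto

lemma proper_c: "proper hi lo \<Longrightarrow> hi = lo - 2 + 2 * int (nat ((hi - lo) div 2 + 1))"
  unfolding proper_def by (simp add: nat_0_le) presburger

lemma fv7_01: "fv 7 q b = (if fv 7 q b \<noteq> 0 then 1 else 0)"
  by (simp add: fv_def)

lemma body: assumes a: "pc s = 19" "regs s 0 = 0" "regs s 8 = 1" "regs s 9 = 2" "regs s 5 = int q"
   "regs s 10 = int b" "regs s 4 = i" "regs s 6 = S" "regs s 7 = int J" "q < 18" "b < 3" "TAB (mem s)"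
   "step_proper i q b S"
  shows "\<exists>t \<le> 60 + 11 * length (snd (snd (astep i b (q, S, [])))).
     pc ((exec1 PP ^^ t) s) = 93 \<and> regs ((exec1 PP ^^ t) s) 5 = fv 0 q b
     \<and> regs ((exec1 PP ^^ t) s) 6 = fst (snd (astep i b (q, S, [])))
     \<and> regs ((exec1 PP ^^ t) s) 7 = int (J + length (snd (snd (astep i b (q, S, [])))))
     \<and> mem ((exec1 PP ^^ t) s) = wout (mem s) J (map (\<lambda>(x,d). (x, if d then 1 else 0)) (snd (snd (astep i b (q, S, [])))))
     \<and> (\<forall>r\<in>{0,3,4,8,9}. regs ((exec1 PP ^^ t) s) r = regs s r)"
proof -
  define e where "e = 3*q+b"
  have e54: "e < 54" using a(10,11) by (simp add: e_def)
  have fe: "\<And>f. fvE f e = fv f q b" using a(11) by (simp add: e_def fvE_qb)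
  define s1v where "s1v = sup1 i q b S"
  define hA where "hA = hiA i q b s1v"
  define lA where "lA = loA i q b s1v"
  define hB where "hB = hiB i q b s1v"
  define c1 where "c1 = nat ((hA - lA) div 2 + 1)"
  define c2 where "c2 = nat ((hB - s1v) div 2 + 1)"
  have pr: "proper hA lA" "proper hB s1v" using a(13) by (simp_all add: step_proper_def hA_def lA_def hB_def s1v_def)
  have hs: "snd (snd (astep i b (q, S, []))) = map (\<lambda>x. (x, fv 7 q b \<noteq> 0)) (eseg hA c1) @ map (\<lambda>x. (x, False)) (eseg hB c2)"
    by (simp add: astep_def Let_def segs_eseg hA_def lA_def hB_def s1v_def c1_def c2_def)
  define sE where "sE = (exec1 PP ^^ 3) s"
  have E: "pc sE = 22" "regs sE 11 = int e" "mem sE = mem s" "\<forall>r\<in>{0,3,4,5,6,7,8,9}. regs sE r = regs s r"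
    using blkE[of s q b] a unfolding sE_def e_def by auto
  define tA where "tA = (if fvE 1 e = 0 then 4 else 5) + (if fvE 3 e = 0 then 5 else 6) + 5 + (if fvE 5 e = 0 then 5 else 6) + (7::nat)"
  define sA where "sA = (exec1 PP ^^ tA) sE"
  have A: "pc sA = 51" "regs sA 6 = s1v" "regs sA 14 = hA" "regs sA 15 = lA" "regs sA 16 = fv 7 q b"
     "mem sA = mem s" "\<forall>r\<in>{0,3,4,5,7,8,9}. regs sA r = regs s r" "regs sA 11 = int e"
    using blkA[of sE e] E a e54 unfolding sA_def tA_def
    by (auto simp: fe s1v_def sup1_def hA_def hiA_def lA_def loA_def)
  define sEA where "sEA = (exec1 PP ^^ (11*c1+3)) sA"
  have EA: "pc sEA = 62" "regs sEA 7 = int (J + c1)"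
    "mem sEA = wout (mem s) J (map (\<lambda>x. (x, fv 7 q b)) (eseg hA c1))"
    "\<forall>r. r \<notin> {7,12,13,14} \<longrightarrow> regs sEA r = regs sA r"
    using emit_loop_51[of sA hA lA "fv 7 q b" J c1] A a proper_c[OF pr(1)] unfolding sEA_def c1_def
    by auto
  define tB where "tB = (if fvE 8 e = 0 then 5 else 6) + (7::nat)"
  define sB where "sB = (exec1 PP ^^ tB) sEA"
  have B: "pc sB = 75" "regs sB 14 = hB" "regs sB 15 = s1v" "regs sB 16 = 0"
    "mem sB = mem sEA" "\<forall>r\<in>{0,3,4,5,6,7,8,9,11}. regs sB r = regs sEA r"
    using blkB[of sEA e] EA A E a e54 TAB_wout unfolding sB_def tB_def
    by (auto simp: fe hB_def hiB_def)
  define sEB where "sEB = (exec1 PP ^^ (11*c2+3)) sB"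
  have EB: "pc sEB = 86" "regs sEB 7 = int (J + c1 + c2)"
    "mem sEB = wout (mem sEA) (J + c1) (map (\<lambda>x. (x, 0)) (eseg hB c2))"
    "\<forall>r. r \<notin> {7,12,13,14} \<longrightarrow> regs sEB r = regs sB r"
    using emit_loop_75[of sB hB s1v 0 "J + c1" c2] B EA A a proper_c[OF pr(2)] unfolding sEB_def c2_def
    by auto
  define sC where "sC = (exec1 PP ^^ 7) sEB"
  have C: "pc sC = 93" "regs sC 6 = s1v + fv 2 q b" "regs sC 5 = fv 0 q b" "mem sC = mem sEB"
    "\<forall>r\<in>{0,3,4,7,8,9}. regs sC r = regs sEB r"
    using blkC[of sEB e] EB B EA A E a e54 TAB_wout unfolding sC_def
    by (auto simp: fe)
  define t where "t = 3 + tA + (11*c1+3) + tB + (11*c2+3) + 7"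
  have st: "(exec1 PP ^^ t) s = sC"
    unfolding t_def sC_def sEB_def sB_def sEA_def sA_def sE_def by (simp only: fp_add)
  have tle: "t \<le> 60 + 11 * length (snd (snd (astep i b (q, S, []))))"
    unfolding t_def tA_def tB_def hs by simp
  have m: "mem sC = wout (mem s) J (map (\<lambda>(x,d). (x, if d then 1 else 0)) (snd (snd (astep i b (q, S, [])))))"
    unfolding hs C(4) EB(3) EA(3) by (subst fv7_01) (simp add: comp_def wout_append)
  have s6: "fst (snd (astep i b (q, S, []))) = s1v + fv 2 q b"
    by (simp add: astep_def Let_def s1v_def)
  show ?thesis
    apply (rule exI[of _ t])
    using tle st C EB B EA A E a m s6 hs by auto
qed

lemma exec1_gen: "pc s < length PP \<Longrightarrow> PP ! pc s \<noteq> Halt \<Longrightarrow> exec1 PP s = exec_i (PP ! pc s) s"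
  by (simp add: exec1_def halted_def exec_i_def split: instr.splits)

lemma len_PP: "length PP = 99 + 3 * length tentries + 1"
  by (simp add: PP_def len_mainc initL_def length_concat sum_list_triv case_prod_beta comp_def)

lemma PP_init: "k < 3 * length tentries \<Longrightarrow> PP ! (99 + k) = initL tentries ! k"
  by (simp add: PP_def nth_append len_mainc initL_def length_concat sum_list_triv case_prod_beta comp_def)

lemma PP_last: "PP ! (99 + 3 * length tentries) = Jmp 1"
  by (simp add: PP_def nth_append len_mainc initL_def length_concat sum_list_triv case_prod_beta comp_def)

lemma initL_Cons: "initL ((a,v) # L) = [LoadConst 1 a, LoadConst 2 v, StoreI 1 2] @ initL L"
  by (simp add: initL_def)

lemma length_initL: "length (initL L) = 3 * length L"
  by (induction L) (auto simp: initL_def)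

definition upd_pair :: "(int \<Rightarrow> int) \<Rightarrow> int \<times> int \<Rightarrow> (int \<Rightarrow> int)" where
  "upd_pair m av = m(fst av := snd av)"

lemma init_run: "(\<And>k. k < 3 * length L \<Longrightarrow> PP ! (ofs + k) = initL L ! k) \<Longrightarrow> ofs + 3 * length L \<le> length PP
  \<Longrightarrow> pc s = ofs \<Longrightarrow>
  pc ((exec1 PP ^^ (3 * length L)) s) = ofs + 3 * length L
  \<and> mem ((exec1 PP ^^ (3 * length L)) s) = foldl upd_pair (mem s) L
  \<and> (\<forall>r. r \<noteq> 1 \<and> r \<noteq> 2 \<longrightarrow> regs ((exec1 PP ^^ (3 * length L)) s) r = regs s r)"
proof (induction L arbitrary: ofs s)
  case Nil then show ?case by simp
next
  case (Cons x L)
  obtain a v where x: "x = (a, v)" by (cases x)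
  have c0: "PP ! ofs = LoadConst 1 a" using Cons.prems(1)[of 0] by (simp add: x initL_Cons)
  have c1: "PP ! Suc ofs = LoadConst 2 v" using Cons.prems(1)[of 1] by (simp add: x initL_Cons)
  have c2: "PP ! Suc (Suc ofs) = StoreI 1 2" using Cons.prems(1)[of 2] by (simp add: x initL_Cons numeral_2_eq_2)
  have l: "Suc (Suc ofs) < length PP" using Cons.prems(2) by simp
  define s3 where "s3 = (exec1 PP ^^ 3) s"
  have s3: "pc s3 = ofs + 3" "mem s3 = (mem s)(a := v)" "\<forall>r. r \<noteq> 1 \<and> r \<noteq> 2 \<longrightarrow> regs s3 r = regs s r"
    unfolding s3_def using Cons.prems(3) l c0 c1 c2
    by (simp_all add: fpn exec1_gen exec_i_def)
  have code: "PP ! (ofs + 3 + k) = initL L ! k" if "k < 3 * length L" for k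
  proof -
    have "PP ! (ofs + (3 + k)) = initL L ! k" using Cons.prems(1)[of "3+k"] that by (simp add: x initL_Cons)
    then show ?thesis by (simp add: add.assoc)
  qed
  have IH: "pc ((exec1 PP ^^ (3 * length L)) s3) = ofs + 3 + 3 * length L
  \<and> mem ((exec1 PP ^^ (3 * length L)) s3) = foldl upd_pair (mem s3) L
  \<and> (\<forall>r. r \<noteq> 1 \<and> r \<noteq> 2 \<longrightarrow> regs ((exec1 PP ^^ (3 * length L)) s3) r = regs s3 r)"
    using Cons.IH[OF code _ s3(1)] Cons.prems(2) by simp
  have e: "(exec1 PP ^^ (3 * length (x # L))) s = (exec1 PP ^^ (3 * length L)) s3"
    unfolding s3_def by (simp add: fp_add[symmetric] algebra_simps)
  have fc: "foldl upd_pair (mem s) (x # L) = foldl upd_pair ((mem s)(a := v)) L"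
    by (simp only: x foldl_Cons upd_pair_def fst_conv snd_conv)
  show ?case unfolding e fc using IH s3 by simp
qed

lemma upd_pair_Pair: "upd_pair m (a, v) = m(a := v)"
  by (simp add: upd_pair_def)

lemma foldl_upd_snoc: "foldl upd_pair m (L @ [(a', v')]) = (foldl upd_pair m L)(a' := v')"
  by (simp add: upd_pair_def)

lemma foldl_upd_fun: "(a, v) \<in> set L \<Longrightarrow> (\<forall>v'. (a, v') \<in> set L \<longrightarrow> v' = v) \<Longrightarrow>
  foldl upd_pair m L a = v"
proof (induction L rule: rev_induct)
  case Nil then show ?case by simp
next
  case (snoc x L)
  obtain a' v' where x: "x = (a', v')" by (cases x)
  show ?case
  proof (cases "a' = a")
    case True
    then have "(a, v') \<in> set (L @ [x])" using x by simp
    then have "v' = v" using snoc.prems(2) by blast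
    then show ?thesis using True by (simp add: x upd_pair_Pair)
  next
    case False
    then have "(a, v) \<in> set L" using snoc.prems(1) x by auto
    moreover have "\<forall>v'. (a, v') \<in> set L \<longrightarrow> v' = v" using snoc.prems(2) by auto
    ultimately have "foldl upd_pair m L a = v" by (rule snoc.IH)
    then show ?thesis using False by (simp add: x upd_pair_Pair)
  qed
qed

lemma foldl_upd_notin: "a \<notin> fst ` set L \<Longrightarrow> foldl upd_pair m L a = m a"
proof (induction L rule: rev_induct)
  case Nil then show ?case by simp
next
  case (snoc x L)
  obtain a' v' where x: "x = (a', v')" by (cases x)
  have "a \<noteq> a'" "a \<notin> fst ` set L" using snoc.prems x by auto
  then show ?case using snoc.IH by (simp add: x upd_pair_Pair)
qed

lemma taddr_inj: "taddr f (3*q+b) = taddr f' (3*q'+b') \<Longrightarrow> b < 3 \<Longrightarrow> b' < 3 \<Longrightarrow> q < 18 \<Longrightarrow> q' < 18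
   \<Longrightarrow> f = f' \<and> q = q' \<and> b = b'"
proof -
  assume a: "taddr f (3*q+b) = taddr f' (3*q'+b')" "b < 3" "b' < 3" "q < 18" "q' < 18"
  have e: "64*f + (3*q+b) = 64*f' + (3*q'+b')" using a(1) unfolding taddr_def by linarith
  have "(64*f + (3*q+b)) div 64 = f" using a by simp
  moreover have "(64*f' + (3*q'+b')) div 64 = f'" using a by simp
  ultimately have f: "f = f'" using e by simp
  then have "3*q+b = 3*q'+b'" using e by simp
  moreover have "(3*q+b) div 3 = q" "(3*q'+b') div 3 = q'" "(3*q+b) mod 3 = b" "(3*q'+b') mod 3 = b'" using a by simp_all
  ultimately show ?thesis using f by metis
qed

lemma set_tentries: "(a, v) \<in> set tentries \<longleftrightarrow> (\<exists>f q b. f < 10 \<and> q < 18 \<and> b < 3 \<and> fv f q b \<noteq> 0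
   \<and> a = taddr f (3*q+b) \<and> v = fv f q b)"
  unfolding tentries_def by (simp add: Bex_def)

lemma TAB_init: assumes "\<forall>a<0. m a = 0" shows "TAB (foldl upd_pair m tentries)"
  unfolding TAB_def
proof (intro allI impI)
  fix f e :: nat assume f: "f < 10" and e: "e < 54"
  define q where "q = e div 3"
  define b where "b = e mod 3"
  have qb: "q < 18" "b < 3" "e = 3*q+b" using e by (auto simp: q_def b_def)
  have ad: "-(1 + 64 * int f) - int e = taddr f (3*q+b)" using qb by (simp add: taddr_def)
  have fe: "fvE f e = fv f q b" by (simp add: fvE_def q_def b_def)
  show "foldl upd_pair m tentries (-(1 + 64 * int f) - int e) = fvE f e"
  proof (cases "fv f q b = 0")
    case False
    have "(taddr f (3*q+b), fv f q b) \<in> set tentries" using False f qb by (auto simp: set_tentries)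
    moreover have "\<forall>v'. (taddr f (3*q+b), v') \<in> set tentries \<longrightarrow> v' = fv f q b"
    proof (intro allI impI)
      fix v' assume "(taddr f (3*q+b), v') \<in> set tentries"
      then obtain f' q' b' where w: "f' < 10" "q' < 18" "b' < 3" "taddr f (3*q+b) = taddr f' (3*q'+b')" "v' = fv f' q' b'"
        by (auto simp: set_tentries)
      then have "f = f' \<and> q = q' \<and> b = b'" using taddr_inj[OF w(4)] qb by simp
      then show "v' = fv f q b" using w by simp
    qed
    ultimately show ?thesis unfolding ad fe by (rule foldl_upd_fun)
  next
    case True
    have "taddr f (3*q+b) \<notin> fst ` set tentries"
    proof
      assume "taddr f (3*q+b) \<in> fst ` set tentries"
      then obtain v where "(taddr f (3*q+b), v) \<in> set tentries" by force
      then obtain f' q' b' where w: "f' < 10" "q' < 18" "b' < 3" "fv f' q' b' \<noteq> 0" "taddr f (3*q+b) = taddr f' (3*q'+b')"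
        by (auto simp: set_tentries)
      then have "f = f' \<and> q = q' \<and> b = b'" using taddr_inj[OF w(5)] qb by simp
      then show False using w True by simp
    qed
    then show ?thesis unfolding ad fe True using assms by (simp add: foldl_upd_notin taddr_def)
  qed
qed

definition INP :: "bool list \<Rightarrow> (int \<Rightarrow> int) \<Rightarrow> bool" where
  "INP w m \<longleftrightarrow> (\<forall>i<length w. m (-1001 - int i) = int (bitv w i))"

definition OUTP :: "(int \<Rightarrow> int) \<Rightarrow> (int \<times> bool) list \<Rightarrow> bool" where
  "OUTP m out \<longleftrightarrow> (\<forall>j<length out. m (2 * int j + 1) = fst (out ! j) \<and> m (2 * int j + 2) = (if snd (out ! j) then 1 else 0))"

lemma INP_wout: "INP w m \<Longrightarrow> INP w (wout m J xs)"
  unfolding INP_def by (simp add: wout_low)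

lemma wout_high: "a < 2 * int J + 1 \<Longrightarrow> wout m J xs a = m a"
  by (induction m J xs rule: wout.induct) auto

lemma OUTP_wout: "OUTP m out \<Longrightarrow>
  OUTP (wout m (length out) (map (\<lambda>(x,d). (x, if d then 1 else 0)) hs)) (out @ hs)"
proof (induction hs arbitrary: m out)
  case Nil then show ?case by simp
next
  case (Cons h hs)
  obtain x d where h: "h = (x, d)" by (cases h)
  define m' where "m' = m(2 * int (length out) + 1 := x, 2 + 2 * int (length out) := (if d then 1 else 0))"
  have "OUTP m' (out @ [h])"
    using Cons.prems unfolding OUTP_def m'_def h
    by (auto simp: nth_append less_Suc_eq)
  from Cons.IH[OF this] show ?case
    by (simp add: h m'_def fun_upd_def)
qed

lemma copy_loop: "pc s = 6 \<Longrightarrow> regs s 18 = int a \<Longrightarrow> regs s 17 = -1000 \<Longrightarrow> regs s 8 = 1 \<Longrightarrow>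
  pc ((exec1 PP ^^ (6*a+1)) s) = 12
  \<and> (\<forall>x. mem ((exec1 PP ^^ (6*a+1)) s) x = (if -1000 - int a \<le> x \<and> x \<le> -1001 then mem s (-1000 - x) else mem s x))
  \<and> (\<forall>r. r \<notin> {2,13,18} \<longrightarrow> regs ((exec1 PP ^^ (6*a+1)) s) r = regs s r)"
proof (induction a arbitrary: s)
  case 0 then show ?case by (simp add: EX)
next
  case (Suc a)
  define s1 where "s1 = (exec1 PP ^^ 6) s"
  have s1: "pc s1 = 6" "regs s1 18 = int a" "regs s1 17 = -1000" "regs s1 8 = 1"
    "mem s1 = (mem s)(-1000 - int (Suc a) := mem s (int (Suc a)))"
    "\<forall>r. r \<notin> {2,13,18} \<longrightarrow> regs s1 r = regs s r"
    using Suc.prems unfolding s1_def by (simp_all add: EX)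
  have e: "(exec1 PP ^^ (6 * Suc a + 1)) s = (exec1 PP ^^ (6*a+1)) s1"
  proof -
    have "6 * Suc a + 1 = 6 + (6*a+1)" by simp
    then show ?thesis unfolding s1_def by (simp only: fp_add)
  qed
  show ?case unfolding e using Suc.IH[OF s1(1-4)] s1(5,6) by auto
qed


definition MI :: "bool list \<Rightarrow> nat \<Rightarrow> ram_state \<Rightarrow> bool" where
  "MI w k s \<longleftrightarrow> pc s = 12 \<and> regs s 0 = 0 \<and> regs s 8 = 1 \<and> regs s 9 = 2 \<and> regs s 3 = int (length w)
    \<and> regs s 4 = int k \<and> regs s 5 = int (fst (arun w k)) \<and> regs s 6 = fst (snd (arun w k))
    \<and> regs s 7 = int (length (snd (snd (arun w k)))) \<and> TAB (mem s) \<and> INP w (mem s)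
    \<and> OUTP (mem s) (snd (snd (arun w k)))"

lemma head_lt: "pc s = 12 \<Longrightarrow> regs s 3 = int n \<Longrightarrow> regs s 4 = int k \<Longrightarrow> k < n \<Longrightarrow>
  pc ((exec1 PP ^^ 6) s) = 19 \<and> regs ((exec1 PP ^^ 6) s) 10 = mem s (-1001 - int k)
  \<and> mem ((exec1 PP ^^ 6) s) = mem s \<and> (\<forall>r\<in>{0,3,4,5,6,7,8,9}. regs ((exec1 PP ^^ 6) s) r = regs s r)"
  by (simp add: EX)

lemma head_eq: "pc s = 12 \<Longrightarrow> regs s 3 = int n \<Longrightarrow> regs s 4 = int n \<Longrightarrow>
  pc ((exec1 PP ^^ 3) s) = 19 \<and> regs ((exec1 PP ^^ 3) s) 10 = 2
  \<and> mem ((exec1 PP ^^ 3) s) = mem s \<and> (\<forall>r\<in>{0,3,4,5,6,7,8,9}. regs ((exec1 PP ^^ 3) s) r = regs s r)"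
  by (simp add: EX)

lemma tail_lt: "pc s = 93 \<Longrightarrow> regs s 3 = int n \<Longrightarrow> regs s 4 = int k \<Longrightarrow> k < n \<Longrightarrow> regs s 8 = 1 \<Longrightarrow>
  pc ((exec1 PP ^^ 4) s) = 12 \<and> regs ((exec1 PP ^^ 4) s) 4 = int (Suc k)
  \<and> mem ((exec1 PP ^^ 4) s) = mem s \<and> (\<forall>r\<in>{0,3,5,6,7,8,9}. regs ((exec1 PP ^^ 4) s) r = regs s r)"
  by (simp add: EX)

lemma tail_eq: "pc s = 93 \<Longrightarrow> regs s 3 = int n \<Longrightarrow> regs s 4 = int n \<Longrightarrow> regs s 0 = 0 \<Longrightarrow>
  pc ((exec1 PP ^^ 3) s) = 98 \<and> mem ((exec1 PP ^^ 3) s) = (mem s)(0 := regs s 7)"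
  by (simp add: EX)

lemma arun_lt18: "acc (runD 0 w) \<Longrightarrow> k \<le> length w \<Longrightarrow> fst (arun w k) < 18"
  using AI_all[of w k] runD_lt[of 0 "take k w"] by (auto simp: AI_def)

lemma fv0_nonneg: "fv 0 q b \<ge> 0" by (simp add: fv_def)

lemma iter: assumes "MI w k s" "k < length w" "acc (runD 0 w)"
  shows "\<exists>t \<le> 70 + 11 * (length (snd (snd (arun w (Suc k)))) - length (snd (snd (arun w k)))).
           MI w (Suc k) ((exec1 PP ^^ t) s)"
proof -
  obtain q S out where st: "arun w k = (q, S, out)" by (cases "arun w k") auto
  have q18: "q < 18" using arun_lt18[of w k] assms st by simp
  have sp: "step_proper (int k) q (bitv w k) S" using arun_proper[OF assms(3,2)] st by simp
  have b3: "bitv w k < 3" by (simp add: bitv_def)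
  have M: "pc s = 12" "regs s 0 = 0" "regs s 8 = 1" "regs s 9 = 2" "regs s 3 = int (length w)"
    "regs s 4 = int k" "regs s 5 = int q" "regs s 6 = S" "regs s 7 = int (length out)" "TAB (mem s)"
    "INP w (mem s)" "OUTP (mem s) out"
    using assms(1) st by (simp_all add: MI_def)
  define s1 where "s1 = (exec1 PP ^^ 6) s"
  have H: "pc s1 = 19" "regs s1 10 = int (bitv w k)" "mem s1 = mem s" "\<forall>r\<in>{0,3,4,5,6,7,8,9}. regs s1 r = regs s r"
    using head_lt[OF M(1,5,6) assms(2)] M(11) assms(2) unfolding s1_def INP_def by auto
  define hs where "hs = snd (snd (astep (int k) (bitv w k) (q, S, [])))"
  obtain t2 where t2: "t2 \<le> 60 + 11 * length hs"
    "pc ((exec1 PP ^^ t2) s1) = 93" "regs ((exec1 PP ^^ t2) s1) 5 = fv 0 q (bitv w k)"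
    "regs ((exec1 PP ^^ t2) s1) 6 = fst (snd (astep (int k) (bitv w k) (q, S, [])))"
    "regs ((exec1 PP ^^ t2) s1) 7 = int (length out + length hs)"
    "mem ((exec1 PP ^^ t2) s1) = wout (mem s) (length out) (map (\<lambda>(x,d). (x, if d then 1 else 0)) hs)"
    "\<forall>r\<in>{0,3,4,8,9}. regs ((exec1 PP ^^ t2) s1) r = regs s r"
    using body[of s1 q "bitv w k" "int k" S "length out"] H M q18 b3 sp unfolding hs_def by auto
  define s2 where "s2 = (exec1 PP ^^ t2) s1"
  define s3 where "s3 = (exec1 PP ^^ 4) s2"
  have T: "pc s3 = 12" "regs s3 4 = int (Suc k)" "mem s3 = mem s2" "\<forall>r\<in>{0,3,5,6,7,8,9}. regs s3 r = regs s2 r"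
    using tail_lt[of s2 "length w" k] t2 M assms(2) unfolding s3_def s2_def by auto
  have an: "arun w (Suc k) = (nat (fv 0 q (bitv w k)), fst (snd (astep (int k) (bitv w k) (q, S, []))), out @ hs)"
    unfolding arun_Suc st hs_def by (subst astep_app) (simp add: astep_def Let_def)
  have "MI w (Suc k) s3"
    unfolding MI_def an using T t2 M fv0_nonneg[of q "bitv w k"] TAB_wout INP_wout OUTP_wout[OF M(12)]
    unfolding s2_def by auto
  moreover have "(exec1 PP ^^ (6 + t2 + 4)) s = s3"
    unfolding s3_def s2_def s1_def by (simp only: fp_add)
  moreover have "6 + t2 + 4 \<le> 70 + 11 * (length (snd (snd (arun w (Suc k)))) - length (snd (snd (arun w k))))"
    using t2(1) an st by simp
  ultimately show ?thesis by metis
qed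

lemma final_step: assumes "MI w (length w) s" "acc (runD 0 w)"
  shows "\<exists>t \<le> 70 + 11 * (length (snd (snd (afin w))) - length (snd (snd (arun w (length w))))).
     pc ((exec1 PP ^^ t) s) = 98 \<and> mem ((exec1 PP ^^ t) s) 0 = int (length (snd (snd (afin w))))
     \<and> OUTP (mem ((exec1 PP ^^ t) s)) (snd (snd (afin w)))"
proof -
  define n where "n = length w"
  obtain q S out where st: "arun w n = (q, S, out)" by (cases "arun w n") auto
  have q18: "q < 18" using arun_lt18[of w n] assms st n_def by simp
  have sp: "step_proper (int n) q 2 S" using alg_correct[OF assms(2)] st n_def by auto
  have M: "pc s = 12" "regs s 0 = 0" "regs s 8 = 1" "regs s 9 = 2" "regs s 3 = int n"
    "regs s 4 = int n" "regs s 5 = int q" "regs s 6 = S" "regs s 7 = int (length out)" "TAB (mem s)"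
    "OUTP (mem s) out"
    using assms(1) st n_def by (simp_all add: MI_def)
  define s1 where "s1 = (exec1 PP ^^ 3) s"
  have H: "pc s1 = 19" "regs s1 10 = int 2" "mem s1 = mem s" "\<forall>r\<in>{0,3,4,5,6,7,8,9}. regs s1 r = regs s r"
    using head_eq[OF M(1,5,6)] unfolding s1_def by auto
  define hs where "hs = snd (snd (astep (int n) 2 (q, S, [])))"
  obtain t2 where t2: "t2 \<le> 60 + 11 * length hs"
    "pc ((exec1 PP ^^ t2) s1) = 93"
    "regs ((exec1 PP ^^ t2) s1) 7 = int (length out + length hs)"
    "mem ((exec1 PP ^^ t2) s1) = wout (mem s) (length out) (map (\<lambda>(x,d). (x, if d then 1 else 0)) hs)"
    "\<forall>r\<in>{0,3,4,8,9}. regs ((exec1 PP ^^ t2) s1) r = regs s r"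
    using body[of s1 q 2 "int n" S "length out"] H M q18 sp unfolding hs_def by auto
  define s2 where "s2 = (exec1 PP ^^ t2) s1"
  define s3 where "s3 = (exec1 PP ^^ 3) s2"
  have T: "pc s3 = 98" "mem s3 = (mem s2)(0 := regs s2 7)"
    using tail_eq[of s2 n] t2 M unfolding s3_def s2_def by auto
  have af: "snd (snd (afin w)) = out @ hs"
    unfolding afin_def n_def[symmetric] st hs_def by (subst astep_app) simp
  have O: "OUTP (mem s2) (out @ hs)" using OUTP_wout[OF M(11)] t2(4) unfolding s2_def by simp
  have "OUTP (mem s3) (out @ hs)" using O T(2) unfolding OUTP_def by simp
  moreover have "mem s3 0 = int (length (out @ hs))" using T t2 unfolding s2_def by simp
  moreover have "(exec1 PP ^^ (3 + t2 + 3)) s = s3"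
    unfolding s3_def s2_def s1_def by (simp only: fp_add)
  moreover have "3 + t2 + 3 \<le> 70 + 11 * (length (snd (snd (afin w))) - length (snd (snd (arun w (length w)))))"
    using t2(1) af st n_def by simp
  ultimately show ?thesis using T(1) af by metis
qed

lemma arun_len_mono: "length (snd (snd (arun w k))) \<le> length (snd (snd (arun w (Suc k))))"
proof -
  obtain q S out where st: "arun w k = (q, S, out)" by (cases "arun w k") auto
  show ?thesis unfolding arun_Suc st by (subst astep_app) simp
qed

lemma loop_all: assumes "MI w 0 s" "acc (runD 0 w)"
  shows "k \<le> length w \<Longrightarrow> \<exists>t \<le> 70 * k + 11 * length (snd (snd (arun w k))). MI w k ((exec1 PP ^^ t) s)"
proof (induction k)
  case 0 then show ?case using assms(1) by (intro exI[of _ 0]) simp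
next
  case (Suc k)
  then obtain t1 where t1: "t1 \<le> 70 * k + 11 * length (snd (snd (arun w k)))" "MI w k ((exec1 PP ^^ t1) s)"
    by auto
  obtain t2 where t2: "t2 \<le> 70 + 11 * (length (snd (snd (arun w (Suc k)))) - length (snd (snd (arun w k))))"
    "MI w (Suc k) ((exec1 PP ^^ t2) ((exec1 PP ^^ t1) s))"
    using iter[OF t1(2) _ assms(2)] Suc.prems by auto
  have "(exec1 PP ^^ (t1 + t2)) s = (exec1 PP ^^ t2) ((exec1 PP ^^ t1) s)" by (simp only: fp_add)
  moreover have "t1 + t2 \<le> 70 * Suc k + 11 * length (snd (snd (arun w (Suc k))))"
    using t1(1) t2(1) arun_len_mono[of w k] by simp
  ultimately show ?case using t2(2) by metis
qed

lemma tentries_addr: "(a, v) \<in> set tentries \<Longrightarrow> -630 \<le> a \<and> a \<le> -1"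
  unfolding set_tentries taddr_def by auto

lemma m1_out: "a \<ge> 0 \<or> a < -630 \<Longrightarrow> foldl upd_pair m tentries a = m a"
  by (rule foldl_upd_notin) (use tentries_addr in force)

lemma init_phase: "\<exists>t \<le> 8 + 3 * length tentries + 6 * length w. MI w 0 ((exec1 PP ^^ t) (init_state w))"
proof -
  define n where "n = length w"
  define L where "L = length tentries"
  define s0 where "s0 = init_state w"
  define m0 where "m0 = mem s0"
  have m0neg: "\<forall>a<0. m0 a = 0" by (simp add: m0_def s0_def init_state_def)
  define s1 where "s1 = (exec1 PP ^^ 1) s0"
  have S1: "pc s1 = 99" "mem s1 = m0" "regs s1 = regs s0"
    unfolding s1_def m0_def s0_def by (simp_all add: EX init_state_def)
  define s2 where "s2 = (exec1 PP ^^ (3 * L)) s1"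
  have S2: "pc s2 = 99 + 3 * L" "mem s2 = foldl upd_pair m0 tentries"
     "\<forall>r. r \<noteq> 1 \<and> r \<noteq> 2 \<longrightarrow> regs s2 r = regs s0 r"
    using init_run[of tentries 99 s1] PP_init len_PP S1 unfolding s2_def L_def by auto
  define s3 where "s3 = (exec1 PP ^^ 1) s2"
  have S3: "pc s3 = 1" "mem s3 = mem s2" "regs s3 = regs s2"
  proof -
    have "pc s2 < length PP" "PP ! pc s2 = Jmp 1" using S2(1) len_PP PP_last L_def by simp_all
    then show "pc s3 = 1" "mem s3 = mem s2" "regs s3 = regs s2"
      unfolding s3_def by (simp_all add: exec1_gen exec_i_def)
  qed
  define m1 where "m1 = foldl upd_pair m0 tentries"
  have m1_0: "m1 0 = int n" unfolding m1_def using m1_out[of 0 m0]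
    by (simp add: m0_def s0_def init_state_def n_def)
  define s4 where "s4 = (exec1 PP ^^ 5) s3"
  have R0: "regs s0 = (\<lambda>_. 0)" by (simp add: s0_def init_state_def)
  have S4: "pc s4 = 6" "mem s4 = m1" "regs s4 18 = int n" "regs s4 17 = -1000" "regs s4 8 = 1"
    "regs s4 9 = 2" "regs s4 3 = int n" "\<forall>r\<in>{0,4,5,6,7}. regs s4 r = 0"
    using S3 S2 R0 m1_0 unfolding s4_def m1_def[symmetric] by (simp_all add: EX)
  define s5 where "s5 = (exec1 PP ^^ (6 * n + 1)) s4"
  have S5: "pc s5 = 12"
    "\<forall>x. mem s5 x = (if -1000 - int n \<le> x \<and> x \<le> -1001 then m1 (-1000 - x) else m1 x)"
    "\<forall>r. r \<notin> {2,13,18} \<longrightarrow> regs s5 r = regs s4 r"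
    using copy_loop[OF S4(1,3,4,5)] S4(2) unfolding s5_def by auto
  have TAB1: "TAB m1" unfolding m1_def by (rule TAB_init[OF m0neg])
  have TAB5: "TAB (mem s5)" using TAB1 S5(2) unfolding TAB_def by auto
  have INP5: "INP w (mem s5)" unfolding INP_def
  proof (intro allI impI)
    fix i assume i: "i < length w"
    have "mem s5 (-1001 - int i) = m1 (1 + int i)" using S5(2) i n_def by simp
    also have "\<dots> = m0 (1 + int i)" unfolding m1_def by (rule m1_out) simp
    also have "\<dots> = int (bitv w i)" using i by (simp add: m0_def s0_def init_state_def bitv_def)
    finally show "mem s5 (-1001 - int i) = int (bitv w i)" .
  qed
  have "MI w 0 s5" unfolding MI_def arun_0 using S5 S4 TAB5 INP5 n_def by (simp add: OUTP_def)
  moreover have "(exec1 PP ^^ (1 + 3 * L + 1 + 5 + (6 * n + 1))) (init_state w) = s5"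
    unfolding s5_def s4_def s3_def s2_def s1_def s0_def by (simp only: fp_add)
  moreover have "1 + 3 * L + 1 + 5 + (6 * n + 1) \<le> 8 + 3 * length tentries + 6 * length w"
    by (simp add: L_def n_def)
  ultimately show ?thesis by metis
qed

lemma hop_pegs: "apply_hop h w = Some w' \<Longrightarrow> Suc (pegs w') = pegs w"
  using apply_hop_decomp[of h w w'] by (auto simp: pegs_append)

lemma hops_pegs: "apply_hops hs w = Some w' \<Longrightarrow> length hs + pegs w' = pegs w"
proof (induction hs arbitrary: w)
  case Nil then show ?case by simp
next
  case (Cons h hs)
  then obtain w1 where "apply_hop h w = Some w1" "apply_hops hs w1 = Some w'"
    by (auto split: option.splits)
  then show ?case using Cons.IH hop_pegs by fastforce
qed

lemma pegs_le: "pegs w \<le> length w" by (simp add: pegs_def)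

lemma main_w: assumes r: "reducible_to_one w"
  shows "\<exists>k \<le> (3 * length tentries + 100) * length w + (3 * length tentries + 100).
      halted PP (run PP k (init_state w)) \<and> solves w (mem (run PP k (init_state w)))"
proof -
  have ac: "acc (runD 0 w)" by (rule necessity[OF r])
  define n where "n = length w"
  define out where "out = snd (snd (afin w))"
  obtain w' where AC: "apply_hops (convh out) w = Some w'" "pegs w' = 1" "\<forall>x\<in>set out. fst x \<ge> 0"
    using alg_correct[OF ac] unfolding out_def by blast
  have lo: "length out \<le> n"
    using hops_pegs[OF AC(1)] pegs_le[of w] unfolding n_def convh_def by simp
  obtain t1 where t1: "t1 \<le> 8 + 3 * length tentries + 6 * n" "MI w 0 ((exec1 PP ^^ t1) (init_state w))"
    using init_phase[of w] unfolding n_def by blast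
  obtain t2 where t2: "t2 \<le> 70 * n + 11 * length (snd (snd (arun w n)))"
    "MI w n ((exec1 PP ^^ t2) ((exec1 PP ^^ t1) (init_state w)))"
    using loop_all[OF t1(2) ac, of n] unfolding n_def by auto
  obtain t3 where t3: "t3 \<le> 70 + 11 * (length out - length (snd (snd (arun w n))))"
    "pc ((exec1 PP ^^ t3) ((exec1 PP ^^ t2) ((exec1 PP ^^ t1) (init_state w)))) = 98"
    "mem ((exec1 PP ^^ t3) ((exec1 PP ^^ t2) ((exec1 PP ^^ t1) (init_state w)))) 0 = int (length out)"
    "OUTP (mem ((exec1 PP ^^ t3) ((exec1 PP ^^ t2) ((exec1 PP ^^ t1) (init_state w))))) out"
    using final_step[OF t2(2)[unfolded n_def] ac] unfolding out_def n_def by auto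
  define sf where "sf = (exec1 PP ^^ t3) ((exec1 PP ^^ t2) ((exec1 PP ^^ t1) (init_state w)))"
  have runeq: "run PP (t1 + t2 + t3) (init_state w) = sf"
    unfolding run_def sf_def by (simp only: fp_add)
  have mono: "length (snd (snd (arun w n))) \<le> length out"
  proof -
    obtain q S o2 where st: "arun w (length w) = (q, S, o2)" by (cases "arun w (length w)") auto
    show ?thesis unfolding out_def afin_def n_def st by (subst astep_app) simp
  qed
  have tb: "t1 + t2 + t3 \<le> (3 * length tentries + 100) * length w + (3 * length tentries + 100)"
  proof -
    have "t1 + t2 + t3 \<le> 78 + 3 * length tentries + 76 * n + 11 * length out"
      using t1(1) t2(1) t3(1) mono by simp
    also have "\<dots> \<le> 78 + 3 * length tentries + 87 * n" using lo by simp
    also have "\<dots> \<le> (3 * length tentries + 100) * n + (3 * length tentries + 100)"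
      by (simp add: algebra_simps)
    finally show ?thesis by (simp add: n_def)
  qed
  have halt: "halted PP sf"
    using t3(2) unfolding sf_def halted_def PP_main[of 98] by (simp add: PP_main mainc_def)
  have OW: "output_wellformed (mem sf)"
    unfolding output_wellformed_def using t3(3,4) AC(3) unfolding sf_def OUTP_def
    by (auto simp: nth_mem)
  have OH: "output_hops (mem sf) = convh out"
    unfolding output_hops_def convh_def using t3(3,4) unfolding sf_def OUTP_def
    by (auto intro!: nth_equalityI simp: case_prod_beta)
  have "solves w (mem sf)" unfolding solves_def using OW OH AC by auto
  then show ?thesis using tb halt runeq by metis
qed

theorem main_thm: "\<exists>(P :: instr list) (c :: nat). \<forall>w :: config. reducible_to_one w \<longrightarrow>
           (\<exists>k \<le> c * length w + c. halted P (run P k (init_state w)) \<and>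
                                  solves w (mem (run P k (init_state w))))"
  using main_w by blast

theorem corollary1:
  shows "\<exists>(P :: instr list) (c :: nat). \<forall>w :: config. reducible_to_one w \<longrightarrow>
           (\<exists>k \<le> c * length w + c. halted P (run P k (init_state w)) \<and>
                                  solves w (mem (run P k (init_state w))))"
  by (rule main_thm)

end
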